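(* Let $(C,\mathbf A)$ be an $\mathbf a$-output-stable pair ($C\in\mathcal L(\mathcal X,\mathcal Y)$, $\mathbf A\in\mathcal L(\mathcal X)^d$) and let $\mathcal G^{\mathbf a}_{C,\mathbf A}$ be its abelianized observability gramian. Then $$\mathcal G^{\mathbf a}_{C,\mathbf A}-A_1^*\mathcal G^{\mathbf a}_{C,\mathbf A}A_1-\cdots-A_d^*\mathcal G^{\mathbf a}_{C,\mathbf A}A_d\le C^*C.$$ Moreover, the following are equivalent: (1) equality holds in this inequality; (2) $\mathbf A$ is $C$-abelian, i.e. $C\mathbf A^v=C\mathbf A^u$ whenever $u,v\in\mathcal F_d$ with $\mathbf a(v)=\mathbf a(u)$; (3) $\mathcal G^{\mathbf a}_{C,\mathbf A}=\mathcal G_{C,\mathbf A}$.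
   Context: $\mathcal F_d$: free semigroup of words on $\{1,\dots,d\}$; for $v=i_N\cdots i_1$, $\mathbf A^v=A_{i_N}\cdots A_{i_1}$. The abelianization map $\mathbf a\colon\mathcal F_d\to\mathbb Z^d_+$ sends $i_N\cdots i_1$ to $(n_1,\dots,n_d)$ with $n_k=\#\{\ell:i_\ell=k\}$. For $\mathbf n\in\mathbb Z^d_+$: $|\mathbf n|=n_1+\cdots+n_d$, $\mathbf n!=n_1!\cdots n_d!$, $\boldsymbol\lambda^{\mathbf n}=\lambda_1^{n_1}\cdots\lambda_d^{n_d}$. The Arveson space $\mathcal H_{\mathcal Y}(k_d)$ consists of power series $f(\boldsymbol\lambda)=\sum_{\mathbf n}f_{\mathbf n}\boldsymbol\lambda^{\mathbf n}$ ($f_{\mathbf n}\in\mathcal Y$) with $\|f\|^2=\sum_{\mathbf n}\frac{\mathbf n!}{|\mathbf n|!}\|f_{\mathbf n}\|^2<\infty$ (reproducing kernel $1/(1-\langle\boldsymbol\lambda,\boldsymbol\zeta\rangle)$ on the unit ball of $\mathbb C^d$). $(C,\mathbf A)$ is $\mathbf a$-output-stable if $\widehat{\mathcal O}^{\mathbf a}_{C,\mathbf A}\colon x\mapsto\sum_{\mathbf n}\big(\sum_{v\in\mathbf a^{-1}(\mathbf n)}C\mathbf A^vx\big)\boldsymbol\lambda^{\mathbf n}$ (formally $C(I-\lambda_1A_1-\cdots-\lambda_dA_d)^{-1}x$) maps $\mathcal X$ boundedly into $\mathcal H_{\mathcal Y}(k_d)$; then $\mathcal G^{\mathbf a}_{C,\mathbf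 A}=(\widehat{\mathcal O}^{\mathbf a}_{C,\mathbf A})^*\widehat{\mathcal O}^{\mathbf a}_{C,\mathbf A}=\sum_{\mathbf n}\frac{\mathbf n!}{|\mathbf n|!}\sum_{u,v\in\mathbf a^{-1}(\mathbf n)}(\mathbf A^v)^*C^*C\mathbf A^u$. The (noncommutative) observability gramian is $\mathcal G_{C,\mathbf A}=\sum_{v\in\mathcal F_d}(\mathbf A^v)^*C^*C\mathbf A^v$ (strong operator sum). *)

theory Defs
  imports "HOL-Analysis.Analysis" "HOL-Library.Complex_Order"
begin

class complex_inner = real_normed_vector +
  fixes scaleC :: "complex \<Rightarrow> 'a \<Rightarrow> 'a"
    and cinner :: "'a \<Rightarrow> 'a \<Rightarrow> complex"
  assumes scaleC_add_right: "scaleC a (x + y) = scaleC a x + scaleC a y"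
    and scaleC_add_left: "scaleC (a + b) x = scaleC a x + scaleC b x"
    and scaleC_scaleC: "scaleC a (scaleC b x) = scaleC (a * b) x"
    and scaleC_one: "scaleC 1 x = x"
    and scaleC_of_real: "scaleC (complex_of_real r) x = scaleR r x"
    and cinner_add_left: "cinner (x + y) z = cinner x z + cinner y z"
    and cinner_scaleC_left: "cinner (scaleC a x) y = a * cinner x y"
    and cinner_commute: "cinner y x = cnj (cinner x y)"
    and cinner_self_ge_zero: "0 \<le> Re (cinner x x)"
    and cinner_self_eq_zero: "cinner x x = 0 \<longleftrightarrow> x = 0"
    and norm_eq_sqrt_cinner: "norm x = sqrt (Re (cinner x x))"

class chilbert_space = complex_inner + complete_space

instantiation complex :: complex_inner
begin
definition scaleC_complex :: "complex \<Rightarrow> complex \<Rightarrow> complex" where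
  "scaleC_complex a x = a * x"
definition cinner_complex :: "complex \<Rightarrow> complex \<Rightarrow> complex" where
  "cinner_complex x y = x * cnj y"
instance
proof
  fix x :: complex
  show "cinner x x = 0 \<longleftrightarrow> x = 0"
    by (simp add: cinner_complex_def)
qed (auto simp: scaleC_complex_def cinner_complex_def algebra_simps scaleR_conv_of_real
      complex_mult_cnj cmod_def power2_eq_square)
end

instance complex :: chilbert_space ..

definition bounded_clinear :: "('a::complex_inner \<Rightarrow> 'b::complex_inner) \<Rightarrow> bool" where
  "bounded_clinear T \<longleftrightarrow> bounded_linear T \<and> (\<forall>c x. T (scaleC c x) = scaleC c (T x))"

definition adj :: "('a::complex_inner \<Rightarrow> 'b::complex_inner) \<Rightarrow> 'b \<Rightarrow> 'a" where
  "adj T = (SOME S. \<forall>x y. cinner (T x) y = cinner x (S y))"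

definition op_le :: "('a::complex_inner \<Rightarrow> 'a) \<Rightarrow> ('a \<Rightarrow> 'a) \<Rightarrow> bool" where
  "op_le S T \<longleftrightarrow> (\<forall>x. 0 \<le> cinner (T x - S x) x)"

text \<open>The index set \<open>{1,\<dots>,d}\<close> is a finite type \<open>'d\<close>; words in the free semigroup
  \<open>\<F>\<^sub>d\<close> are lists; the word \<open>i\<^sub>N \<cdots> i\<^sub>1\<close> is the list \<open>[i\<^sub>N, \<dots>, i\<^sub>1]\<close>, and
  \<open>A\<^sup>v = A\<^sub>i\<^sub>N \<cdots> A\<^sub>i\<^sub>1\<close>.  Multi-indices in \<open>\<int>\<^sub>+\<^sup>d\<close> are functions \<open>'d \<Rightarrow> nat\<close>.\<close>

fun wordop :: "('d \<Rightarrow> 'a \<Rightarrow> 'a) \<Rightarrow> 'd list \<Rightarrow> 'a \<Rightarrow> 'a" where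
  "wordop A [] = id"
| "wordop A (i # w) = A i \<circ> wordop A w"

definition abel :: "'d list \<Rightarrow> 'd \<Rightarrow> nat" where
  "abel v = (\<lambda>k. count_list v k)"

definition words_of :: "('d \<Rightarrow> nat) \<Rightarrow> 'd list set" where
  "words_of n = {v. abel v = n}"

definition arv_weight :: "('d::finite \<Rightarrow> nat) \<Rightarrow> real" where
  "arv_weight n = (\<Prod>i\<in>UNIV. fact (n i)) / fact (\<Sum>i\<in>UNIV. n i)"

text \<open>Coefficient of \<open>\<lambda>\<^sup>n\<close> in \<open>\<hat>\<O>\<^sup>a\<^sub>C\<^sub>,\<^sub>A x\<close>.\<close>

definition obs_coeff :: "('x \<Rightarrow> 'y::comm_monoid_add) \<Rightarrow> ('d \<Rightarrow> 'x \<Rightarrow> 'x) \<Rightarrow> 'x \<Rightarrow> ('d \<Rightarrow> nat) \<Rightarrow> 'y" where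
  "obs_coeff C A x n = (\<Sum>v\<in>words_of n. C (wordop A v x))"

text \<open>Arveson-space norm squared and inner product of the power series with
  coefficients \<open>f n\<close>, \<open>g n\<close>.\<close>

definition arv_norm2 :: "((('d::finite) \<Rightarrow> nat) \<Rightarrow> 'y::complex_inner) \<Rightarrow> real" where
  "arv_norm2 f = (\<Sum>\<^sub>\<infinity>n. arv_weight n * (norm (f n))\<^sup>2)"

definition arv_inner :: "((('d::finite) \<Rightarrow> nat) \<Rightarrow> 'y::complex_inner) \<Rightarrow> (('d \<Rightarrow> nat) \<Rightarrow> 'y) \<Rightarrow> complex" where
  "arv_inner f g = (\<Sum>\<^sub>\<infinity>n. complex_of_real (arv_weight n) * cinner (f n) (g n))"

text \<open>\<open>\<a>\<close>-output-stability: \<open>x \<mapsto> \<hat>\<O>\<^sup>a\<^sub>C\<^sub>,\<^sub>A x\<close> maps \<open>\<X>\<close> boundedly into the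
  Arveson space \<open>\<H>\<^sub>\<Y>(k\<^sub>d)\<close>.\<close>

definition a_output_stable :: "('x::complex_inner \<Rightarrow> 'y::complex_inner) \<Rightarrow> ('d::finite \<Rightarrow> 'x \<Rightarrow> 'x) \<Rightarrow> bool" where
  "a_output_stable C A \<longleftrightarrow>
     (\<forall>x. (\<lambda>n. arv_weight n * (norm (obs_coeff C A x n))\<^sup>2) summable_on UNIV) \<and>
     (\<exists>M. \<forall>x. arv_norm2 (obs_coeff C A x) \<le> M * (norm x)\<^sup>2)"

text \<open>Abelianized observability gramian \<open>\<G>\<^sup>a = (\<hat>\<O>\<^sup>a)\<^sup>* \<hat>\<O>\<^sup>a\<close>, i.e. the operator
  with \<open>\<langle>\<G>\<^sup>a x, y\<rangle> = \<langle>\<hat>\<O>\<^sup>a x, \<hat>\<O>\<^sup>a y\<rangle>\<^sub>\<H>\<^sub>(\<^sub>k\<^sub>d\<^sub>)\<close>.\<close>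

definition gram_a :: "('x::complex_inner \<Rightarrow> 'y::complex_inner) \<Rightarrow> ('d::finite \<Rightarrow> 'x \<Rightarrow> 'x) \<Rightarrow> 'x \<Rightarrow> 'x" where
  "gram_a C A = (SOME G. \<forall>x y. cinner (G x) y = arv_inner (obs_coeff C A x) (obs_coeff C A y))"

text \<open>\<open>T\<close> is the strong-operator sum of \<open>\<Sum>\<^sub>v\<^sub>\<in>\<^sub>\<F>\<^sub>d (A\<^sup>v)\<^sup>* C\<^sup>* C A\<^sup>v\<close>, i.e. \<open>T\<close> is the
  (noncommutative) observability gramian \<open>\<G>\<^sub>C\<^sub>,\<^sub>A\<close> (and in particular the sum converges).\<close>

definition is_nc_gram :: "('x::complex_inner \<Rightarrow> 'y::complex_inner) \<Rightarrow> ('d \<Rightarrow> 'x \<Rightarrow> 'x) \<Rightarrow> ('x \<Rightarrow> 'x) \<Rightarrow> bool" where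
  "is_nc_gram C A T \<longleftrightarrow>
     (\<forall>x. ((\<lambda>v. adj (wordop A v) (adj C (C (wordop A v x)))) has_sum T x) UNIV)"

definition C_abelian :: "('x \<Rightarrow> 'y) \<Rightarrow> ('d \<Rightarrow> 'x \<Rightarrow> 'x) \<Rightarrow> bool" where
  "C_abelian C A \<longleftrightarrow> (\<forall>u v. abel v = abel u \<longrightarrow> C \<circ> wordop A v = C \<circ> wordop A u)"

end

theory Submission
  imports Defs
begin

lemma cinner_zero_left[simp]: "cinner 0 (y::'a::complex_inner) = 0"
  using cinner_add_left[of "0::'a" 0 y] by simp

lemma cinner_minus_left[simp]: "cinner (- x) (y::'a::complex_inner) = - cinner x y"
  using cinner_add_left[of x "-x" y] by (simp add: eq_neg_iff_add_eq_0 add.commute)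

lemma cinner_diff_left: "cinner (x - z) (y::'a::complex_inner) = cinner x y - cinner z y"
  using cinner_add_left[of x "-z" y] by simp

lemma cinner_add_right: "cinner x (y + z::'a::complex_inner) = cinner x y + cinner x z"
  by (metis cinner_add_left cinner_commute complex_cnj_add)

lemma cinner_zero_right[simp]: "cinner x (0::'a::complex_inner) = 0"
  by (metis cinner_commute cinner_zero_left complex_cnj_zero)

lemma cinner_minus_right[simp]: "cinner x (- y::'a::complex_inner) = - cinner x y"
  by (metis cinner_commute cinner_minus_left complex_cnj_minus)

lemma cinner_diff_right: "cinner x (y - z::'a::complex_inner) = cinner x y - cinner x z"
  by (metis cinner_commute cinner_diff_left complex_cnj_diff)

lemma cinner_scaleC_right: "cinner x (scaleC a y::'a::complex_inner) = cnj a * cinner x y"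
  by (metis cinner_commute cinner_scaleC_left complex_cnj_mult)

lemma cinner_scaleR_left: "cinner (scaleR r x) (y::'a::complex_inner) = of_real r * cinner x y"
  by (metis cinner_scaleC_left scaleC_of_real)

lemma cinner_scaleR_right: "cinner x (scaleR r y::'a::complex_inner) = of_real r * cinner x y"
  by (metis cinner_scaleC_right scaleC_of_real complex_cnj_complex_of_real)

lemma cinner_sum_left: "cinner (\<Sum>i\<in>I. f i) (y::'a::complex_inner) = (\<Sum>i\<in>I. cinner (f i) y)"
  by (induction I rule: infinite_finite_induct) (auto simp: cinner_add_left)

lemma cinner_sum_right: "cinner y (\<Sum>i\<in>I. f i::'a::complex_inner) = (\<Sum>i\<in>I. cinner y (f i))"
  by (induction I rule: infinite_finite_induct) (auto simp: cinner_add_right)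

lemma scaleC_zero_right[simp]: "scaleC a (0::'a::complex_inner) = 0"
  using scaleC_add_right[of a "0::'a" 0] by simp

lemma scaleC_zero_left[simp]: "scaleC 0 (x::'a::complex_inner) = 0"
  using scaleC_of_real[of 0 x] by simp

lemma scaleC_minus_right: "scaleC a (- x::'a::complex_inner) = - scaleC a x"
  using scaleC_add_right[of a x "-x"] by (simp add: eq_neg_iff_add_eq_0 add.commute)

lemma scaleC_diff_right: "scaleC a (x - y::'a::complex_inner) = scaleC a x - scaleC a y"
  using scaleC_add_right[of a x "-y"] by (simp add: scaleC_minus_right)

lemma scaleC_sum_right: "scaleC a (\<Sum>i\<in>I. f i) = (\<Sum>i\<in>I. scaleC a (f i::'a::complex_inner))"
  by (induction I rule: infinite_finite_induct) (auto simp: scaleC_add_right)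

lemma cinner_self_real: "cinner x (x::'a::complex_inner) = complex_of_real ((norm x)\<^sup>2)"
proof -
  have "Im (cinner x x) = 0"
    using cinner_commute[of x x] by (metis Im_complex_of_real Reals_cnj_iff complex_is_Real_iff)
  moreover have "(norm x)\<^sup>2 = Re (cinner x x)"
    using norm_eq_sqrt_cinner[of x] cinner_self_ge_zero[of x] by simp
  ultimately show ?thesis by (simp add: complex_eq_iff)
qed

lemma Re_cinner_self: "Re (cinner x (x::'a::complex_inner)) = (norm x)\<^sup>2"
  by (simp add: cinner_self_real)

lemma Re_cinner_commute: "Re (cinner x (y::'a::complex_inner)) = Re (cinner y x)"
  by (subst cinner_commute) simp

lemma norm_diff_sq: "(norm (x - y::'a::complex_inner))\<^sup>2 = (norm x)\<^sup>2 - 2 * Re (cinner x y) + (norm y)\<^sup>2"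
proof -
  have "(norm (x - y))\<^sup>2 = Re (cinner (x - y) (x - y))" by (simp add: Re_cinner_self)
  also have "\<dots> = Re (cinner x x) - Re (cinner x y) - Re (cinner y x) + Re (cinner y y)"
    by (simp add: cinner_diff_left cinner_diff_right)
  finally show ?thesis by (simp add: Re_cinner_self Re_cinner_commute[of y x])
qed

lemma norm_add_sq: "(norm (x + y::'a::complex_inner))\<^sup>2 = (norm x)\<^sup>2 + 2 * Re (cinner x y) + (norm y)\<^sup>2"
  using norm_diff_sq[of x "-y"] by simp

lemma parallelogram: "(norm (x + y::'a::complex_inner))\<^sup>2 + (norm (x - y))\<^sup>2 = 2 * (norm x)\<^sup>2 + 2 * (norm y)\<^sup>2"
  by (simp add: norm_add_sq norm_diff_sq)

lemma cinner_eq_zero_iff[simp]: "cinner x x = 0 \<longleftrightarrow> x = (0::'a::complex_inner)"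
  by (rule cinner_self_eq_zero)

lemma cauchy_schwarz_c: "cmod (cinner x (y::'a::complex_inner)) \<le> norm x * norm y"
proof (cases "y = 0")
  case True then show ?thesis by simp
next
  case False
  define c where "c = cinner x y / cinner y y"
  have ny: "cinner y y = complex_of_real ((norm y)\<^sup>2)" by (rule cinner_self_real)
  have ny0: "norm y > 0" using False by simp
  have "0 \<le> Re (cinner (x - scaleC c y) (x - scaleC c y))" by (rule cinner_self_ge_zero)
  also have "cinner (x - scaleC c y) (x - scaleC c y) = cinner x x - cnj c * cinner x y - c * cinner y x + c * cnj c * cinner y y"
    by (simp add: cinner_diff_left cinner_diff_right cinner_scaleC_left cinner_scaleC_right algebra_simps)
  also have "c * cnj c * cinner y y = cnj c * cinner x y"
    using ny0 unfolding c_def ny by (simp add: field_simps)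
  finally have "0 \<le> Re (cinner x x - c * cinner y x)" by simp
  also have "c * cinner y x = complex_of_real ((cmod (cinner x y))\<^sup>2 / (norm y)\<^sup>2)"
    unfolding c_def ny using cinner_commute[of y x]
    by (simp add: complex_norm_square[symmetric] of_real_power)
  finally have "(cmod (cinner x y))\<^sup>2 / (norm y)\<^sup>2 \<le> (norm x)\<^sup>2" by (simp add: Re_cinner_self)
  then have "(cmod (cinner x y))\<^sup>2 \<le> (norm x * norm y)\<^sup>2" using ny0 by (simp add: field_simps power_mult_distrib)
  then show ?thesis by (meson abs_le_square_iff abs_ge_self order.trans norm_ge_zero mult_nonneg_nonneg power2_le_imp_le)
qed

lemma bounded_linear_cinner_left: "bounded_linear (\<lambda>x. cinner x (y::'a::complex_inner))"
proof
  show "cinner (x + z) y = cinner x y + cinner z y" for x z by (rule cinner_add_left)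
  show "cinner (scaleR r x) y = scaleR r (cinner x y)" for r x by (simp add: cinner_scaleR_left scaleR_conv_of_real)
  show "\<exists>K. \<forall>x. norm (cinner x y) \<le> norm x * K"
    using cauchy_schwarz_c by blast
qed

lemma bounded_linear_cinner_right: "bounded_linear (\<lambda>x. cinner (y::'a::complex_inner) x)"
proof
  show "cinner y (x + z) = cinner y x + cinner y z" for x z by (rule cinner_add_right)
  show "cinner y (scaleR r x) = scaleR r (cinner y x)" for r x by (simp add: cinner_scaleR_right scaleR_conv_of_real)
  show "\<exists>K. \<forall>x. norm (cinner y x) \<le> norm x * K"
    using cauchy_schwarz_c by (metis mult.commute)
qed

lemma cinner_ext_left: "(\<And>y. cinner x y = cinner z (y::'a::complex_inner)) \<Longrightarrow> x = z"
  by (metis cinner_diff_left cinner_eq_zero_iff eq_iff_diff_eq_0)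

lemma cinner_ext_right: "(\<And>y. cinner y x = cinner y (z::'a::complex_inner)) \<Longrightarrow> x = z"
  by (metis cinner_diff_right cinner_eq_zero_iff eq_iff_diff_eq_0)


lemma riesz:
  fixes f :: "'a::chilbert_space \<Rightarrow> complex"
  assumes add: "\<And>x y. f (x + y) = f x + f y"
    and sc: "\<And>c x. f (scaleC c x) = c * f x"
    and bnd: "\<And>x. cmod (f x) \<le> K * norm x"
  shows "\<exists>z. \<forall>x. f x = cinner x z"
proof (cases "\<forall>x. f x = 0")
  case True
  then show ?thesis by (intro exI[of _ 0]) simp
next
  case False
  then obtain x1 where x1: "f x1 \<noteq> 0" by blast
  have scR: "f (scaleR r x) = of_real r * f x" for r x using sc[of "of_real r" x] by (simp add: scaleC_of_real)
  have f0: "f 0 = 0" using add[of 0 0] by simp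
  have fminus: "f (- x) = - f x" for x using scR[of "-1" x] by simp
  have fdiff: "f (x - y) = f x - f y" for x y using add[of x "-y"] fminus[of y] by simp
  have blf: "bounded_linear f"
  proof
    show "f (x + y) = f x + f y" for x y by (rule add)
    show "f (scaleR r x) = scaleR r (f x)" for r x by (simp add: scR scaleR_conv_of_real)
    show "\<exists>K. \<forall>x. norm (f x) \<le> norm x * K" using bnd by (metis mult.commute)
  qed
  define S where "S = {x. f x = 1}"
  have uS: "scaleC (1 / f x1) x1 \<in> S" using x1 by (simp add: S_def sc)
  define d where "d = Inf ((\<lambda>x. (norm x)\<^sup>2) ` S)"
  have bdd: "bdd_below ((\<lambda>x. (norm x)\<^sup>2) ` S)" by (intro bdd_belowI[of _ 0]) auto
  have dle: "d \<le> (norm y)\<^sup>2" if "y \<in> S" for y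
    unfolding d_def using bdd that by (intro cInf_lower) auto
  have "\<exists>x. x \<in> S \<and> (norm x)\<^sup>2 < d + inverse (real (Suc n))" for n
  proof -
    have "Inf ((\<lambda>x. (norm x)\<^sup>2) ` S) < d + inverse (real (Suc n))" unfolding d_def by simp
    then obtain v where "v \<in> (\<lambda>x. (norm x)\<^sup>2) ` S" "v < d + inverse (real (Suc n))"
      using cInf_lessD[of "(\<lambda>x. (norm x)\<^sup>2) ` S"] uS by blast
    then show ?thesis by blast
  qed
  then obtain X where XS: "\<And>n. X n \<in> S" and Xn: "\<And>n. (norm (X n))\<^sup>2 < d + inverse (real (Suc n))"
    by metis
  have fX: "f (X n) = 1" for n using XS[of n] by (simp add: S_def)
  have diffb: "(norm (X n - X m))\<^sup>2 \<le> 2 * inverse (real (Suc n)) + 2 * inverse (real (Suc m))" for n m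
  proof -
    have "scaleR (1/2) (X n + X m) \<in> S" using fX by (simp add: S_def scR add)
    then have "d \<le> (norm (scaleR (1/2) (X n + X m)))\<^sup>2" by (rule dle)
    then have "4 * d \<le> (norm (X n + X m))\<^sup>2" by (simp add: power_mult_distrib power2_eq_square)
    moreover have "(norm (X n + X m))\<^sup>2 + (norm (X n - X m))\<^sup>2 = 2 * (norm (X n))\<^sup>2 + 2 * (norm (X m))\<^sup>2"
      by (rule parallelogram)
    ultimately show ?thesis using Xn[of n] Xn[of m] by linarith
  qed
  have "Cauchy X"
  proof (rule metric_CauchyI)
    fix e :: real assume e: "0 < e"
    obtain N where N: "inverse (real (Suc N)) < e\<^sup>2 / 4"
      using e reals_Archimedean[of "e\<^sup>2/4"] by auto
    show "\<exists>M. \<forall>m\<ge>M. \<forall>n\<ge>M. dist (X m) (X n) < e"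
    proof (intro exI allI impI)
      fix m n assume mn: "N \<le> m" "N \<le> n"
      have "inverse (real (Suc m)) \<le> inverse (real (Suc N))" "inverse (real (Suc n)) \<le> inverse (real (Suc N))"
        using mn by (auto simp: field_simps)
      with diffb[of m n] N have "(norm (X m - X n))\<^sup>2 < e\<^sup>2" by linarith
      then have "norm (X m - X n) < e" using e by (simp add: power_less_imp_less_base)
      then show "dist (X m) (X n) < e" by (simp add: dist_norm)
    qed
  qed
  then obtain x0 where lim: "X \<longlonglongrightarrow> x0" using Cauchy_convergent convergent_def by blast
  have "(\<lambda>n. f (X n)) \<longlonglongrightarrow> f x0" using bounded_linear.tendsto[OF blf lim] .
  then have fx0: "f x0 = 1" using fX by (simp add: LIMSEQ_const_iff)
  have x0min: "(norm x0)\<^sup>2 \<le> (norm y)\<^sup>2" if "y \<in> S" for y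
  proof -
    have l1: "(\<lambda>n. (norm (X n))\<^sup>2) \<longlonglongrightarrow> (norm x0)\<^sup>2" by (intro tendsto_intros lim)
    have l2: "(\<lambda>n. (norm y)\<^sup>2 + inverse (real (Suc n))) \<longlonglongrightarrow> (norm y)\<^sup>2 + 0"
      by (intro tendsto_intros LIMSEQ_inverse_real_of_nat)
    have "(norm (X n))\<^sup>2 \<le> (norm y)\<^sup>2 + inverse (real (Suc n))" for n
      using Xn[of n] dle[OF that] by linarith
    then show ?thesis
      using LIMSEQ_le[OF l1 l2] by simp
  qed
  have orth: "cinner k x0 = 0" if fk: "f k = 0" for k
  proof -
    define \<beta> where "\<beta> = cinner k x0"
    define s where "s = 1 / ((norm k)\<^sup>2 + 1)"
    define q where "q = (cmod \<beta>)\<^sup>2"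
    have s0: "s > 0" unfolding s_def by (simp add: add_nonneg_pos)
    have sk: "s * (norm k)\<^sup>2 < 1"
    proof -
      have p: "(norm k)\<^sup>2 + 1 > 0" by (simp add: add_nonneg_pos)
      have "s * (norm k)\<^sup>2 = (norm k)\<^sup>2 / ((norm k)\<^sup>2 + 1)" unfolding s_def by simp
      also have "\<dots> < 1" using p by (subst divide_less_eq_1_pos) auto
      finally show ?thesis .
    qed
    define t where "t = - (of_real s) * cnj \<beta>"
    have "x0 + scaleC t k \<in> S" using fx0 fk by (simp add: S_def add sc)
    then have m: "(norm x0)\<^sup>2 \<le> (norm (x0 + scaleC t k))\<^sup>2" by (rule x0min)
    have bb: "\<beta> * cnj \<beta> = of_real q" unfolding q_def by (simp add: complex_norm_square[symmetric] of_real_power)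
    have ck: "cinner x0 k = cnj \<beta>" unfolding \<beta>_def by (rule cinner_commute)
    have "cinner (x0 + scaleC t k) (x0 + scaleC t k)
        = cinner x0 x0 + cnj t * cinner x0 k + t * cinner k x0 + t * cnj t * cinner k k"
      by (simp add: cinner_add_left cinner_add_right cinner_scaleC_left cinner_scaleC_right algebra_simps)
    also have "\<dots> = cinner x0 x0 + of_real (- 2 * s * q + s\<^sup>2 * q * (norm k)\<^sup>2)"
    proof -
      have t1: "cnj t * cinner x0 k = - of_real (s * q)"
        unfolding t_def ck using bb by (simp add: mult.assoc)
      have t2: "t * cinner k x0 = - of_real (s * q)"
        unfolding t_def \<beta>_def[symmetric] using bb by (simp add: mult.assoc mult.commute[of "cnj \<beta>"])
      have "t * cnj t = of_real s * of_real s * (\<beta> * cnj \<beta>)"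
        unfolding t_def by (simp add: mult.assoc mult.left_commute[of "cnj \<beta>"])
      then have t3: "t * cnj t * cinner k k = of_real (s\<^sup>2 * q * (norm k)\<^sup>2)"
        unfolding bb cinner_self_real[of k] by (simp add: power2_eq_square)
      show ?thesis unfolding t1 t2 t3 by simp
    qed
    finally have "Re (cinner (x0 + scaleC t k) (x0 + scaleC t k)) = Re (cinner x0 x0 + of_real (- 2 * s * q + s\<^sup>2 * q * (norm k)\<^sup>2))"
      by simp
    then have "(norm (x0 + scaleC t k))\<^sup>2 = (norm x0)\<^sup>2 + (- 2 * s * q + s\<^sup>2 * q * (norm k)\<^sup>2)"
      by (simp only: Re_cinner_self plus_complex.sel Re_complex_of_real)
    with m have "0 \<le> s * (- 2 * q + s * q * (norm k)\<^sup>2)" by (simp add: algebra_simps power2_eq_square)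
    then have "0 \<le> - 2 * q + s * q * (norm k)\<^sup>2" using s0 by (simp add: zero_le_mult_iff)
    moreover have "s * q * (norm k)\<^sup>2 \<le> q"
    proof -
      have "q * (s * (norm k)\<^sup>2) \<le> q * 1" using sk by (intro mult_left_mono) (auto simp: q_def)
      then show ?thesis by (simp add: algebra_simps)
    qed
    ultimately have "q \<le> 0" by linarith
    then show ?thesis unfolding q_def \<beta>_def by simp
  qed
  have x0ne: "x0 \<noteq> 0" using fx0 f0 by auto
  define z where "z = scaleR (1 / (norm x0)\<^sup>2) x0"
  show ?thesis
  proof (intro exI allI)
    fix x
    have "f (x - scaleC (f x) x0) = 0" by (simp add: fdiff sc fx0)
    then have "cinner (x - scaleC (f x) x0) x0 = 0" by (rule orth)
    then have "cinner x x0 = f x * of_real ((norm x0)\<^sup>2)"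
      by (simp add: cinner_diff_left cinner_scaleC_left cinner_self_real)
    then show "f x = cinner x z" unfolding z_def using x0ne
      by (simp add: cinner_scaleR_right field_simps)
  qed
qed


lemma bclin_add: "bounded_clinear T \<Longrightarrow> T (x + y) = T x + T y"
  unfolding bounded_clinear_def by (simp add: linear_simps)
lemma bclin_scaleC: "bounded_clinear T \<Longrightarrow> T (scaleC c x) = scaleC c (T x)"
  unfolding bounded_clinear_def by blast
lemma bclin_zero: "bounded_clinear T \<Longrightarrow> T 0 = 0"
  unfolding bounded_clinear_def by (simp add: linear_simps)
lemma bclin_diff: "bounded_clinear T \<Longrightarrow> T (x - y) = T x - T y"
  unfolding bounded_clinear_def by (simp add: linear_simps)
lemma bclin_sum: "bounded_clinear T \<Longrightarrow> T (\<Sum>i\<in>I. f i) = (\<Sum>i\<in>I. T (f i))"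
  by (induction I rule: infinite_finite_induct) (auto simp: bclin_add bclin_zero)
lemma bclin_bounded: "bounded_clinear T \<Longrightarrow> \<exists>K. \<forall>x. norm (T x) \<le> norm x * K"
  unfolding bounded_clinear_def using bounded_linear.bounded by blast

lemma bclin_comp: "bounded_clinear S \<Longrightarrow> bounded_clinear T \<Longrightarrow> bounded_clinear (S \<circ> T)"
  unfolding bounded_clinear_def using bounded_linear_compose[of S T] by (auto simp: o_def)

lemma bclin_id: "bounded_clinear (id :: 'a::complex_inner \<Rightarrow> 'a)"
  unfolding bounded_clinear_def using bounded_linear_ident by (auto simp: id_def)

lemma bclin_wordop: "(\<And>i. bounded_clinear (A i)) \<Longrightarrow> bounded_clinear (wordop A v)"
  by (induction v) (auto intro: bclin_comp bclin_id)

lemma wordop_append: "wordop A (u @ v) = wordop A u \<circ> wordop A v"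
  by (induction u) auto

lemma adj_prop:
  fixes T :: "'a::chilbert_space \<Rightarrow> 'b::complex_inner"
  assumes T: "bounded_clinear T"
  shows "cinner (T x) y = cinner x (adj T y)"
proof -
  obtain K where K: "\<And>x. norm (T x) \<le> norm x * K" using bclin_bounded[OF T] by blast
  have "\<exists>z. \<forall>x. cinner (T x) y = cinner x z" for y
  proof (rule riesz)
    show "cinner (T (x + x')) y = cinner (T x) y + cinner (T x') y" for x x'
      by (simp add: bclin_add[OF T] cinner_add_left)
    show "cinner (T (scaleC c x)) y = c * cinner (T x) y" for c x
      by (simp add: bclin_scaleC[OF T] cinner_scaleC_left)
    show "cmod (cinner (T x) y) \<le> (K * norm y) * norm x" for x
    proof -
      have "cmod (cinner (T x) y) \<le> norm (T x) * norm y" by (rule cauchy_schwarz_c)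
      also have "\<dots> \<le> norm x * K * norm y" by (intro mult_right_mono K) auto
      finally show ?thesis by (simp add: algebra_simps)
    qed
  qed
  then have "\<forall>y. \<exists>z. \<forall>x. cinner (T x) y = cinner x z" by blast
  from choice[OF this] obtain S where S: "\<forall>y. \<forall>x. cinner (T x) y = cinner x (S y)" by blast
  have "\<exists>S. \<forall>x y. cinner (T x) y = cinner x (S y)" using S by blast
  from someI_ex[OF this] have "\<forall>x y. cinner (T x) y = cinner x (adj T y)"
    unfolding adj_def .
  then show ?thesis by blast
qed

lemma adj_prop2:
  fixes T :: "'a::chilbert_space \<Rightarrow> 'b::complex_inner"
  assumes T: "bounded_clinear T"
  shows "cinner (adj T y) x = cinner y (T x)"
  using adj_prop[OF T, of x y] cinner_commute[of "adj T y" x] cinner_commute[of y "T x"] by simp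

lemma adj_add: 
  fixes T :: "'a::chilbert_space \<Rightarrow> 'b::complex_inner"
  assumes T: "bounded_clinear T" shows "adj T (x + y) = adj T x + adj T y"
  by (rule cinner_ext_right) (simp add: adj_prop[OF T, symmetric] cinner_add_right)

lemma adj_scaleC: 
  fixes T :: "'a::chilbert_space \<Rightarrow> 'b::complex_inner"
  assumes T: "bounded_clinear T" shows "adj T (scaleC c x) = scaleC c (adj T x)"
  by (rule cinner_ext_right) (simp add: adj_prop[OF T, symmetric] cinner_scaleC_right)

definition inH :: "(('d::finite \<Rightarrow> nat) \<Rightarrow> 'y::complex_inner) \<Rightarrow> bool" where
  "inH f \<longleftrightarrow> (\<lambda>n. arv_weight n * (norm (f n))\<^sup>2) summable_on UNIV"

lemma arv_weight_pos: "arv_weight n > 0"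
  unfolding arv_weight_def by (intro divide_pos_pos prod_pos) auto

lemma young_ineq:
  fixes a b t :: real assumes "t > 0"
  shows "a * b \<le> (t * a\<^sup>2 + b\<^sup>2 / t) / 2"
proof -
  have "0 \<le> (t * a - b)\<^sup>2 / t" using assms by simp
  also have "(t * a - b)\<^sup>2 / t = t * a\<^sup>2 + b\<^sup>2 / t - 2 * a * b"
    using assms by (simp add: power2_eq_square field_simps)
  finally show ?thesis by simp
qed

definition arv_term :: "(('d::finite \<Rightarrow> nat) \<Rightarrow> 'y::complex_inner) \<Rightarrow> (('d \<Rightarrow> nat) \<Rightarrow> 'y) \<Rightarrow> ('d \<Rightarrow> nat) \<Rightarrow> complex" where
  "arv_term f g n = complex_of_real (arv_weight n) * cinner (f n) (g n)"

lemma arv_term_bound: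
  assumes "t > 0"
  shows "norm (arv_term f g n) \<le> (t * (arv_weight n * (norm (f n))\<^sup>2) + (arv_weight n * (norm (g n))\<^sup>2) / t) / 2"
proof -
  have w: "arv_weight n > 0" by (rule arv_weight_pos)
  have "norm (arv_term f g n) = arv_weight n * cmod (cinner (f n) (g n))"
    unfolding arv_term_def using w by (simp add: norm_mult)
  also have "\<dots> \<le> arv_weight n * (norm (f n) * norm (g n))"
    using w cauchy_schwarz_c by (intro mult_left_mono) auto
  also have "\<dots> \<le> arv_weight n * ((t * (norm (f n))\<^sup>2 + (norm (g n))\<^sup>2 / t) / 2)"
    using w young_ineq[OF assms] by (intro mult_left_mono) auto
  finally show ?thesis by (simp add: algebra_simps)
qed

lemma hs_comb:
  fixes F G :: "'a \<Rightarrow> real"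
  shows "(F has_sum a) A \<Longrightarrow> (G has_sum b) A \<Longrightarrow> ((\<lambda>n. (t * F n + G n / t) / 2) has_sum ((t * a + b / t) / 2)) A"
  by (intro has_sum_divide_const has_sum_add has_sum_cmult_right)

lemma arv_term_abs_summable:
  assumes "inH f" "inH g"
  shows "(\<lambda>n. norm (arv_term f g n)) summable_on UNIV"
proof (rule summable_on_comparison_test)
  show "(\<lambda>n. (1 * (arv_weight n * (norm (f n))\<^sup>2) + (arv_weight n * (norm (g n))\<^sup>2) / 1) / 2) summable_on UNIV"
    using assms unfolding inH_def summable_on_def using hs_comb by blast
  show "norm (arv_term f g n) \<le> (1 * (arv_weight n * (norm (f n))\<^sup>2) + (arv_weight n * (norm (g n))\<^sup>2) / 1) / 2" for n
    using arv_term_bound[of 1] by simp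
qed auto

lemma arv_term_summable:
  assumes "inH f" "inH g"
  shows "arv_term f g summable_on UNIV"
  using abs_summable_summable arv_term_abs_summable[OF assms] by blast

lemma arv_inner_term: "arv_inner f g = infsum (arv_term f g) UNIV"
  unfolding arv_inner_def arv_term_def by simp

lemma arv_inner_add_left:
  assumes "inH f1" "inH f2" "inH g"
  shows "arv_inner (\<lambda>n. f1 n + f2 n) g = arv_inner f1 g + arv_inner f2 g"
proof -
  have "arv_term (\<lambda>n. f1 n + f2 n) g = (\<lambda>n. arv_term f1 g n + arv_term f2 g n)"
    unfolding arv_term_def by (auto simp: cinner_add_left algebra_simps)
  then show ?thesis unfolding arv_inner_term
    using infsum_add[OF arv_term_summable[OF assms(1,3)] arv_term_summable[OF assms(2,3)]] by simp
qed

lemma arv_inner_scaleC_left: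
  shows "arv_inner (\<lambda>n. scaleC c (f n)) g = c * arv_inner f g"
proof -
  have "arv_term (\<lambda>n. scaleC c (f n)) g = (\<lambda>n. c * arv_term f g n)"
    unfolding arv_term_def by (auto simp: cinner_scaleC_left algebra_simps)
  then show ?thesis unfolding arv_inner_term by (simp add: infsum_cmult_right')
qed

lemma arv_inner_commute: "arv_inner g f = cnj (arv_inner f g)"
proof -
  have "arv_term g f = (\<lambda>n. cnj (arv_term f g n))"
    unfolding arv_term_def by (auto simp: cinner_commute[of "g _"])
  then show ?thesis unfolding arv_inner_term by simp
qed

lemma arv_inner_zero_left: "arv_inner (\<lambda>n. 0) g = 0"
  unfolding arv_inner_def by simp

lemma arv_inner_zero_right: "arv_inner f (\<lambda>n. 0) = 0"
  unfolding arv_inner_def by simp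

lemma arv_inner_self:
  assumes "inH f"
  shows "arv_inner f f = complex_of_real (arv_norm2 f)"
proof -
  have e: "arv_term f f = (\<lambda>n. complex_of_real (arv_weight n * (norm (f n))\<^sup>2))"
    unfolding arv_term_def by (auto simp: cinner_self_real)
  have "((\<lambda>n. arv_weight n * (norm (f n))\<^sup>2) has_sum arv_norm2 f) UNIV"
    using assms unfolding inH_def arv_norm2_def by simp
  then have "((\<lambda>n. complex_of_real (arv_weight n * (norm (f n))\<^sup>2)) has_sum complex_of_real (arv_norm2 f)) UNIV"
    by (rule has_sum_of_real)
  then have "(arv_term f f has_sum complex_of_real (arv_norm2 f)) UNIV"
    unfolding e .
  then show ?thesis unfolding arv_inner_term by (simp add: infsumI)
qed

lemma arv_inner_bound:
  assumes "inH f" "inH g" "t > 0"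
  shows "cmod (arv_inner f g) \<le> (t * arv_norm2 f + arv_norm2 g / t) / 2"
proof -
  have "cmod (arv_inner f g) \<le> infsum (\<lambda>n. norm (arv_term f g n)) UNIV"
    unfolding arv_inner_term by (rule norm_infsum_bound[OF arv_term_abs_summable[OF assms(1,2)]])
  also have "\<dots> \<le> (t * arv_norm2 f + arv_norm2 g / t) / 2"
  proof (rule has_sum_mono)
    show "((\<lambda>n. norm (arv_term f g n)) has_sum infsum (\<lambda>n. norm (arv_term f g n)) UNIV) UNIV"
      using arv_term_abs_summable[OF assms(1,2)] by simp
    show "((\<lambda>n. (t * (arv_weight n * (norm (f n))\<^sup>2) + (arv_weight n * (norm (g n))\<^sup>2) / t) / 2) has_sum
      ((t * arv_norm2 f + arv_norm2 g / t) / 2)) UNIV"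
      using assms unfolding inH_def arv_norm2_def by (intro hs_comb) auto
    show "norm (arv_term f g n) \<le> (t * (arv_weight n * (norm (f n))\<^sup>2) + (arv_weight n * (norm (g n))\<^sup>2) / t) / 2" for n
      by (rule arv_term_bound[OF assms(3)])
  qed
  finally show ?thesis .
qed


lemma obs_add:
  assumes C: "bounded_clinear C" and A: "\<And>i. bounded_clinear (A i)"
  shows "obs_coeff C A (x + y) = (\<lambda>n. obs_coeff C A x n + obs_coeff C A y n)"
  unfolding obs_coeff_def
  by (simp add: bclin_add[OF bclin_wordop[OF A]] bclin_add[OF C] sum.distrib)

lemma obs_scaleC:
  assumes C: "bounded_clinear C" and A: "\<And>i. bounded_clinear (A i)"
  shows "obs_coeff C A (scaleC c x) = (\<lambda>n. scaleC c (obs_coeff C A x n))"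
  unfolding obs_coeff_def
  by (simp add: bclin_scaleC[OF bclin_wordop[OF A]] bclin_scaleC[OF C] scaleC_sum_right)

lemma obs_zero:
  assumes C: "bounded_clinear C" and A: "\<And>i. bounded_clinear (A i)"
  shows "obs_coeff C A 0 = (\<lambda>n. 0)"
  unfolding obs_coeff_def
  by (simp add: bclin_zero[OF bclin_wordop[OF A]] bclin_zero[OF C])

lemma inH_obs: "a_output_stable C A \<Longrightarrow> inH (obs_coeff C A x)"
  unfolding a_output_stable_def inH_def by blast

lemma stab_bound:
  assumes "a_output_stable C A"
  obtains M where "M > 0" "\<And>x. arv_norm2 (obs_coeff C A x) \<le> M * (norm x)\<^sup>2"
proof -
  obtain M where M: "\<And>x. arv_norm2 (obs_coeff C A x) \<le> M * (norm x)\<^sup>2"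
    using assms unfolding a_output_stable_def by blast
  have "arv_norm2 (obs_coeff C A x) \<le> max M 1 * (norm x)\<^sup>2" for x
    using M[of x] by (meson dual_order.trans max.cobounded1 mult_right_mono zero_le_power2)
  then show ?thesis using that[of "max M 1"] by simp
qed

lemma gram_prop:
  fixes C :: "'x::chilbert_space \<Rightarrow> 'y::chilbert_space" and A :: "'d::finite \<Rightarrow> 'x \<Rightarrow> 'x"
  assumes C: "bounded_clinear C" and A: "\<And>i. bounded_clinear (A i)" and st: "a_output_stable C A"
  shows "cinner (gram_a C A x) y = arv_inner (obs_coeff C A x) (obs_coeff C A y)"
proof -
  let ?O = "obs_coeff C A"
  obtain M where M0: "M > 0" and M: "\<And>x. arv_norm2 (?O x) \<le> M * (norm x)\<^sup>2"
    using stab_bound[OF st] by blast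
  have ex: "\<exists>z. \<forall>y. arv_inner (?O y) (?O x) = cinner y z" for x
  proof (rule riesz)
    show "arv_inner (?O (y1 + y2)) (?O x) = arv_inner (?O y1) (?O x) + arv_inner (?O y2) (?O x)" for y1 y2
      unfolding obs_add[OF C A] by (rule arv_inner_add_left) (auto intro: inH_obs[OF st])
    show "arv_inner (?O (scaleC c y)) (?O x) = c * arv_inner (?O y) (?O x)" for c y
      unfolding obs_scaleC[OF C A] by (rule arv_inner_scaleC_left)
    show "cmod (arv_inner (?O y) (?O x)) \<le> (M * norm x) * norm y" for y
    proof (cases "x = 0 \<or> y = 0")
      case True
      then show ?thesis by (auto simp: obs_zero[OF C A] arv_inner_zero_left arv_inner_zero_right)
    next
      case False
      define t where "t = norm x / norm y"
      have t0: "t > 0" using False by (simp add: t_def)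
      have "cmod (arv_inner (?O y) (?O x)) \<le> (t * arv_norm2 (?O y) + arv_norm2 (?O x) / t) / 2"
        by (rule arv_inner_bound[OF inH_obs[OF st] inH_obs[OF st] t0])
      also have "\<dots> \<le> (t * (M * (norm y)\<^sup>2) + (M * (norm x)\<^sup>2) / t) / 2"
        using t0 M[of x] M[of y] by (intro divide_right_mono add_mono mult_left_mono) auto
      also have "\<dots> = (M * norm x) * norm y"
        using False unfolding t_def by (simp add: field_simps power2_eq_square)
      finally show ?thesis .
    qed
  qed
  then have "\<forall>x. \<exists>z. \<forall>y. arv_inner (?O y) (?O x) = cinner y z" by blast
  from choice[OF this] obtain G where G: "\<forall>x y. arv_inner (?O y) (?O x) = cinner y (G x)" by blast
  have G': "\<forall>x y. cinner (G x) y = arv_inner (?O x) (?O y)"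
  proof (intro allI)
    fix x y
    have "cinner (G x) y = cnj (cinner y (G x))" by (rule cinner_commute)
    also have "\<dots> = cnj (arv_inner (?O y) (?O x))" using G by simp
    also have "\<dots> = arv_inner (?O x) (?O y)" by (simp add: arv_inner_commute[of "?O x"])
    finally show "cinner (G x) y = arv_inner (?O x) (?O y)" .
  qed
  have "\<exists>G. \<forall>x y. cinner (G x) y = arv_inner (?O x) (?O y)" using G' by blast
  from someI_ex[OF this] have "\<forall>x y. cinner (gram_a C A x) y = arv_inner (?O x) (?O y)"
    unfolding gram_a_def .
  then show ?thesis by blast
qed


lemma weighted_var:
  fixes c :: "'i \<Rightarrow> 'y::complex_inner"
  assumes fin: "finite I" and p: "\<And>i. i \<in> I \<Longrightarrow> p i > 0" and p1: "(\<Sum>i\<in>I. p i) = 1"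
  shows "(\<Sum>i\<in>I. (norm (c i))\<^sup>2 / p i) - (norm (\<Sum>i\<in>I. c i))\<^sup>2
       = (\<Sum>i\<in>I. (norm (c i - scaleR (p i) (\<Sum>j\<in>I. c j)))\<^sup>2 / p i)"
proof -
  define s where "s = (\<Sum>j\<in>I. c j)"
  have trm: "(norm (c i - scaleR (p i) s))\<^sup>2 / p i = (norm (c i))\<^sup>2 / p i - 2 * Re (cinner (c i) s) + p i * (norm s)\<^sup>2"
    if "i \<in> I" for i
  proof -
    have pi: "p i > 0" using p that by blast
    have "(norm (c i - scaleR (p i) s))\<^sup>2 = (norm (c i))\<^sup>2 - 2 * (p i * Re (cinner (c i) s)) + (p i)\<^sup>2 * (norm s)\<^sup>2"
      by (simp add: norm_diff_sq cinner_scaleR_right power_mult_distrib)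
    then show ?thesis using pi by (simp add: field_simps power2_eq_square)
  qed
  have "(\<Sum>i\<in>I. (norm (c i - scaleR (p i) s))\<^sup>2 / p i)
      = (\<Sum>i\<in>I. (norm (c i))\<^sup>2 / p i) - 2 * (\<Sum>i\<in>I. Re (cinner (c i) s)) + (\<Sum>i\<in>I. p i) * (norm s)\<^sup>2"
    by (simp add: trm sum.distrib sum_subtractf sum_distrib_left sum_distrib_right)
  also have "(\<Sum>i\<in>I. Re (cinner (c i) s)) = Re (cinner (\<Sum>i\<in>I. c i) s)"
    by (simp add: cinner_sum_left Re_sum)
  also have "\<dots> = (norm s)\<^sup>2" unfolding s_def[symmetric] by (rule Re_cinner_self)
  finally show ?thesis unfolding s_def[symmetric] using p1 by simp
qed

definition msub :: "('d \<Rightarrow> nat) \<Rightarrow> 'd \<Rightarrow> 'd \<Rightarrow> nat" where "msub m i = (\<lambda>k. if k = i then m k - 1 else m k)"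
definition madd :: "('d \<Rightarrow> nat) \<Rightarrow> 'd \<Rightarrow> 'd \<Rightarrow> nat" where "madd m i = (\<lambda>k. if k = i then m k + 1 else m k)"

definition msize :: "('d::finite \<Rightarrow> nat) \<Rightarrow> nat" where "msize m = (\<Sum>k\<in>UNIV. m k)"

lemma abel_append1: "abel (v @ [i]) = madd (abel v) i"
  unfolding abel_def msub_def madd_def by (auto simp: fun_eq_iff)

lemma abel_Nil: "abel [] = (\<lambda>_. 0)"
  unfolding abel_def by (auto simp: fun_eq_iff)

lemma length_msize: "length v = msize (abel (v :: ('d::finite) list))"
proof (induction v)
  case Nil then show ?case by (simp add: msize_def abel_def)
next
  case (Cons a v)
  have "abel (a # v) = (\<lambda>k. (if a = k then 1 else 0) + abel v k)"
    unfolding abel_def by (auto simp: fun_eq_iff)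
  then have "msize (abel (a # v)) = (\<Sum>k\<in>UNIV. (if a = k then 1 else 0) + abel v k)"
    unfolding msize_def by simp
  also have "\<dots> = 1 + msize (abel v)"
    unfolding msize_def by (simp add: sum.distrib)
  finally show ?case using Cons by simp
qed

lemma words_of_finite: "finite (words_of (m :: ('d::finite) \<Rightarrow> nat))"
proof -
  have "words_of m \<subseteq> {v. set v \<subseteq> UNIV \<and> length v = msize m}"
    unfolding words_of_def using length_msize by auto
  moreover have "finite {v. set v \<subseteq> (UNIV :: 'd set) \<and> length v = msize m}"
    by (rule finite_lists_length_eq) simp
  ultimately show ?thesis by (rule finite_subset)
qed

lemma words_of_0: "words_of ((\<lambda>_. 0) :: 'd::finite \<Rightarrow> nat) = {[]}"
proof -
  have "v = []" if "abel v = ((\<lambda>_. 0) :: 'd \<Rightarrow> nat)" for v :: "'d list"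
    using length_msize[of v] that by (simp add: msize_def)
  then show ?thesis unfolding words_of_def by (auto simp: abel_Nil)
qed

lemma msize_minus: "m i > 0 \<Longrightarrow> msize (msub m i) = msize m - 1"
proof -
  assume mi: "m i > 0"
  have "msize m = m i + (\<Sum>k\<in>UNIV - {i}. m k)" unfolding msize_def
    by (simp add: sum.remove)
  moreover have "msize (msub m i) = (m i - 1) + (\<Sum>k\<in>UNIV - {i}. m k)"
  proof -
    have "msize (msub m i) = msub m i i + (\<Sum>k\<in>UNIV - {i}. msub m i k)" unfolding msize_def
      by (rule sum.remove) auto
    also have "(\<Sum>k\<in>UNIV - {i}. msub m i k) = (\<Sum>k\<in>UNIV - {i}. m k)"
      by (rule sum.cong) (auto simp: msub_def)
    finally show ?thesis by (simp add: msub_def)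
  qed
  ultimately show ?thesis using mi by simp
qed

lemma msize_pos: "m i > 0 \<Longrightarrow> msize m > 0"
proof -
  assume "m i > 0"
  moreover have "m i \<le> msize m" unfolding msize_def by (rule member_le_sum) auto
  ultimately show ?thesis by simp
qed

lemma msize_zero_iff: "msize m = 0 \<longleftrightarrow> m = (\<lambda>_. 0)"
  unfolding msize_def by (auto simp: fun_eq_iff)

lemma madd_msub: "m i > 0 \<Longrightarrow> madd (msub m i) i = m"
  by (auto simp: fun_eq_iff msub_def madd_def)

lemma msub_madd: "msub (madd n i) i = n"
  by (auto simp: fun_eq_iff msub_def madd_def)

lemma weight_step:
  assumes mi: "m i > 0"
  shows "arv_weight (msub m i) * real (m i) = arv_weight m * real (msize m)"
proof -
  have P: "(\<Prod>k\<in>UNIV. fact (m k) :: real) = real (m i) * (\<Prod>k\<in>UNIV. fact ((msub m i) k))"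
  proof -
    have "(\<Prod>k\<in>UNIV. fact (m k) :: real) = fact (m i) * (\<Prod>k\<in>UNIV - {i}. fact (m k))"
      by (simp add: prod.remove)
    also have "fact (m i) = (real (m i) * fact (m i - 1) :: real)"
      using mi by (rule fact_reduce)
    also have "(\<Prod>k\<in>UNIV - {i}. fact (m k) :: real) = (\<Prod>k\<in>UNIV - {i}. fact ((msub m i) k))"
      by (intro prod.cong) (auto simp: msub_def madd_def)
    also have "(real (m i) * fact (m i - 1)) * (\<Prod>k\<in>UNIV - {i}. fact ((msub m i) k) :: real)
       = real (m i) * (fact ((msub m i) i) * (\<Prod>k\<in>UNIV - {i}. fact ((msub m i) k)))"
      by (simp add: msub_def madd_def)
    also have "fact ((msub m i) i) * (\<Prod>k\<in>UNIV - {i}. fact ((msub m i) k)) = (\<Prod>k\<in>UNIV. fact ((msub m i) k) :: real)"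
      by (simp add: prod.remove)
    finally show ?thesis .
  qed
  have ms: "msize m > 0" using msize_pos[of m i, OF mi] .
  have F: "(fact (msize m) :: real) = real (msize m) * fact (msize (msub m i))"
    using fact_reduce[OF ms] msize_minus[of m i, OF mi] by simp
  have "arv_weight m * real (msize m) = (\<Prod>k\<in>UNIV. fact (m k)) / fact (msize m) * real (msize m)"
    unfolding arv_weight_def msize_def by simp
  also have "\<dots> = real (m i) * (\<Prod>k\<in>UNIV. fact ((msub m i) k)) / fact (msize (msub m i))"
    unfolding P F using ms by (simp add: field_simps)
  also have "\<dots> = arv_weight (msub m i) * real (m i)"
    unfolding arv_weight_def msize_def by simp
  finally show ?thesis by simp
qed

lemma words_decomp:
  fixes m :: "'d::finite \<Rightarrow> nat"
  assumes "m \<noteq> (\<lambda>_. 0)"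
  shows "words_of m = (\<Union>i\<in>{i. m i > 0}. (\<lambda>v. v @ [i]) ` words_of (msub m i))"
proof (intro equalityI subsetI)
  fix v assume v: "v \<in> words_of m"
  then have av: "abel v = m" by (simp add: words_of_def)
  have "v \<noteq> []" using av assms abel_Nil by auto
  then obtain u i where vu: "v = u @ [i]" by (metis append_butlast_last_id)
  have am: "m = madd (abel u) i" using av unfolding vu abel_append1 by simp
  then have "m i > 0" by (simp add: msub_def madd_def)
  moreover have "abel u = msub m i" using am by (auto simp: fun_eq_iff msub_def madd_def)
  ultimately show "v \<in> (\<Union>i\<in>{i. m i > 0}. (\<lambda>v. v @ [i]) ` words_of (msub m i))"
    using vu by (auto simp: words_of_def)
next
  fix v assume "v \<in> (\<Union>i\<in>{i. m i > 0}. (\<lambda>v. v @ [i]) ` words_of (msub m i))"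
  then obtain i u where "m i > 0" "abel u = msub m i" "v = u @ [i]" by (auto simp: words_of_def)
  then show "v \<in> words_of m" by (simp add: words_of_def abel_append1 madd_msub)
qed

lemma words_decomp_disjoint:
  "i \<noteq> j \<Longrightarrow> (\<lambda>v. v @ [i]) ` words_of (msub m i) \<inter> (\<lambda>v. v @ [j]) ` words_of (msub m j) = {}"
  by auto

lemma sum_words_decomp:
  fixes m :: "'d::finite \<Rightarrow> nat"
  assumes "m \<noteq> (\<lambda>_. 0)"
  shows "(\<Sum>v\<in>words_of m. f v) = (\<Sum>i\<in>{i. m i > 0}. \<Sum>u\<in>words_of (msub m i). f (u @ [i]))"
proof -
  have "(\<Sum>v\<in>words_of m. f v) = (\<Sum>i\<in>{i. m i > 0}. \<Sum>v\<in>(\<lambda>v. v @ [i]) ` words_of (msub m i). f v)"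
    unfolding words_decomp[OF assms]
    by (rule sum.UNION_disjoint) (auto simp: words_of_finite intro: finite_imageI)
  also have "\<dots> = (\<Sum>i\<in>{i. m i > 0}. \<Sum>u\<in>words_of (msub m i). f (u @ [i]))"
  proof (rule sum.cong[OF refl])
    fix i
    have "inj_on (\<lambda>v. v @ [i]) (words_of (msub m i))" by (auto simp: inj_on_def)
    then show "(\<Sum>v\<in>(\<lambda>v. v @ [i]) ` words_of (msub m i). f v) = (\<Sum>u\<in>words_of (msub m i). f (u @ [i]))"
      by (simp add: sum.reindex)
  qed
  finally show ?thesis .
qed

lemma card_words_weight: "real (card (words_of (m :: 'd::finite \<Rightarrow> nat))) * arv_weight m = 1"
proof (induction m rule: measure_induct_rule[of msize])
  case (less m)
  show ?case
  proof (cases "m = (\<lambda>_. 0)")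
    case True
    then show ?thesis by (simp add: words_of_0 arv_weight_def)
  next
    case False
    have card: "card (words_of m) = (\<Sum>i\<in>{i. m i > 0}. card (words_of (msub m i)))"
      using sum_words_decomp[OF False, of "\<lambda>_. 1::nat"] by simp
    have ms: "msize m > 0" using False msize_zero_iff by auto
    have w: "arv_weight m > 0" by (rule arv_weight_pos)
    have "real (card (words_of (msub m i))) = real (m i) / (arv_weight m * real (msize m))" if "m i > 0" for i
    proof -
      have "msize (msub m i) < msize m" using msize_minus[of m i, OF that] ms by simp
      then have IH: "real (card (words_of (msub m i))) * arv_weight (msub m i) = 1" by (rule less)
      have wi: "arv_weight (msub m i) > 0" by (rule arv_weight_pos)
      from IH have "real (card (words_of (msub m i))) = 1 / arv_weight (msub m i)" using wi by (simp add: field_simps)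
      also have "\<dots> = real (m i) / (arv_weight m * real (msize m))"
        using weight_step[of m i, OF that] wi that w ms by (simp add: field_simps)
      finally show ?thesis .
    qed
    then have "real (card (words_of m)) = (\<Sum>i\<in>{i. m i > 0}. real (m i)) / (arv_weight m * real (msize m))"
      unfolding card by (simp add: sum_divide_distrib)
    also have "(\<Sum>i\<in>{i. m i > 0}. real (m i)) = real (msize m)"
      unfolding msize_def of_nat_sum by (rule sum.mono_neutral_left) auto
    finally show ?thesis using w ms by (simp add: field_simps)
  qed
qed


lemma has_sum_sum_fin:
  fixes f :: "'i \<Rightarrow> 'a \<Rightarrow> 'b::topological_comm_monoid_add"
  assumes "finite I" "\<And>i. i \<in> I \<Longrightarrow> (f i has_sum s i) A"
  shows "((\<lambda>x. \<Sum>i\<in>I. f i x) has_sum (\<Sum>i\<in>I. s i)) A"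
  using assms by (induction I rule: finite_induct) (auto intro: has_sum_add)

lemma polarization:
  fixes E :: "'a::complex_inner \<Rightarrow> 'a"
  assumes add: "\<And>x y. E (x + y) = E x + E y" and sc: "\<And>c x. E (scaleC c x) = scaleC c (E x)"
    and z: "\<And>z. cinner (E z) z = 0"
  shows "E x = 0"
proof -
  have s1: "cinner (E x) y + cinner (E y) x = 0" for y
  proof -
    have "cinner (E y) x + cinner (E x) y = 0"
      using z[of "x + y"] z[of x] z[of y] by (simp add: add cinner_add_left cinner_add_right)
    then show ?thesis by (simp add: add.commute)
  qed
  have s2: "- \<i> * cinner (E x) y + \<i> * cinner (E y) x = 0" for y
    using s1[of "scaleC \<i> y"] by (simp add: sc cinner_scaleC_left cinner_scaleC_right)
  have "cinner (E x) (E x) = 0" using s1[of "E x"] s2[of "E x"]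
    by (simp add: algebra_simps)
  then show ?thesis by simp
qed

definition cc :: "('x \<Rightarrow> 'y::comm_monoid_add) \<Rightarrow> ('d \<Rightarrow> 'x \<Rightarrow> 'x) \<Rightarrow> 'x \<Rightarrow> ('d \<Rightarrow> nat) \<Rightarrow> 'd \<Rightarrow> 'y" where
  "cc C A x m i = (\<Sum>u\<in>words_of (msub m i). C (wordop A (u @ [i]) x))"

definition Fi :: "('x \<Rightarrow> 'y::complex_inner) \<Rightarrow> ('d::finite \<Rightarrow> 'x \<Rightarrow> 'x) \<Rightarrow> 'x \<Rightarrow> 'd \<Rightarrow> ('d \<Rightarrow> nat) \<Rightarrow> real" where
  "Fi C A x i m = (if m i > 0 then arv_weight (msub m i) * (norm (cc C A x m i))\<^sup>2 else 0)"

definition gap :: "('x \<Rightarrow> 'y::complex_inner) \<Rightarrow> ('d::finite \<Rightarrow> 'x \<Rightarrow> 'x) \<Rightarrow> 'x \<Rightarrow> ('d \<Rightarrow> nat) \<Rightarrow> real" where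
  "gap C A x m = (\<Sum>i\<in>UNIV. Fi C A x i m) - arv_weight m * (norm (obs_coeff C A x m))\<^sup>2
      + (if m = (\<lambda>_. 0) then (norm (C x))\<^sup>2 else 0)"

definition total :: "('x \<Rightarrow> 'y::complex_inner) \<Rightarrow> ('d::finite \<Rightarrow> 'x \<Rightarrow> 'x) \<Rightarrow> 'x \<Rightarrow> real" where
  "total C A x = (\<Sum>i\<in>UNIV. arv_norm2 (obs_coeff C A (A i x))) - arv_norm2 (obs_coeff C A x) + (norm (C x))\<^sup>2"

lemma obsA: "obs_coeff C A (A i x) n = cc C A x (madd n i) i"
  unfolding obs_coeff_def cc_def msub_madd by (simp add: wordop_append)

lemma madd_pos: "madd n i i > 0"
  by (simp add: madd_def)

lemma madd_image: "range (\<lambda>n. madd n i) = {m. m i > 0}"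
proof (intro equalityI subsetI)
  fix m :: "'a \<Rightarrow> nat" assume "m \<in> {m. m i > 0}"
  then have "madd (msub m i) i = m" by (simp add: madd_msub)
  then show "m \<in> range (\<lambda>n. madd n i)" by (metis rangeI)
qed (auto simp: madd_def)

lemma inj_madd: "inj (\<lambda>n. madd n i)"
  by (rule inj_on_inverseI[where g = "\<lambda>m. msub m i"]) (simp add: msub_madd)

lemma hs_Fi:
  assumes st: "a_output_stable C A"
  shows "(Fi C A x i has_sum arv_norm2 (obs_coeff C A (A i x))) UNIV"
proof -
  have h: "((\<lambda>n. arv_weight n * (norm (obs_coeff C A (A i x) n))\<^sup>2) has_sum arv_norm2 (obs_coeff C A (A i x))) UNIV"
    using inH_obs[OF st] unfolding inH_def arv_norm2_def by simp
  have "(Fi C A x i \<circ> (\<lambda>n. madd n i)) = (\<lambda>n. arv_weight n * (norm (obs_coeff C A (A i x) n))\<^sup>2)"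
    by (auto simp: fun_eq_iff Fi_def obsA madd_pos msub_madd)
  with h have "((Fi C A x i \<circ> (\<lambda>n. madd n i)) has_sum arv_norm2 (obs_coeff C A (A i x))) UNIV" by simp
  then have "(Fi C A x i has_sum arv_norm2 (obs_coeff C A (A i x))) (range (\<lambda>n. madd n i))"
    using has_sum_reindex[OF inj_madd[of i]] by blast
  then have "(Fi C A x i has_sum arv_norm2 (obs_coeff C A (A i x))) {m. m i > 0}"
    unfolding madd_image .
  then show ?thesis
    by (subst has_sum_cong_neutral[where T = "{m. m i > 0}" and g = "Fi C A x i"]) (auto simp: Fi_def)
qed

lemma hs_gap:
  assumes st: "a_output_stable C A"
  shows "(gap C A x has_sum total C A x) UNIV"
proof -
  have h1: "((\<lambda>m. \<Sum>i\<in>UNIV. Fi C A x i m) has_sum (\<Sum>i\<in>UNIV. arv_norm2 (obs_coeff C A (A i x)))) UNIV"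
    by (rule has_sum_sum_fin) (auto intro: hs_Fi[OF st])
  have h2: "((\<lambda>m. arv_weight m * (norm (obs_coeff C A x m))\<^sup>2) has_sum arv_norm2 (obs_coeff C A x)) UNIV"
    using inH_obs[OF st] unfolding inH_def arv_norm2_def by simp
  have h3: "((\<lambda>m. if m = (\<lambda>_. 0) then (norm (C x))\<^sup>2 else 0) has_sum (norm (C x))\<^sup>2) UNIV"
    by (rule has_sum_finite_neutralI[where B = "{\<lambda>_. 0}"]) auto
  have "((\<lambda>m. (\<Sum>i\<in>UNIV. Fi C A x i m) + - (arv_weight m * (norm (obs_coeff C A x m))\<^sup>2)
      + (if m = (\<lambda>_. 0) then (norm (C x))\<^sup>2 else 0)) has_sum
      ((\<Sum>i\<in>UNIV. arv_norm2 (obs_coeff C A (A i x))) + - arv_norm2 (obs_coeff C A x) + (norm (C x))\<^sup>2)) UNIV"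
    by (intro has_sum_add h1 h3 has_sum_uminusI h2)
  then show ?thesis unfolding gap_def total_def by simp
qed

lemma gap_at_0: "gap C A x (\<lambda>_. 0) = 0"
  unfolding gap_def Fi_def obs_coeff_def by (simp add: words_of_0 arv_weight_def)

lemma gap_formula:
  fixes C :: "'x \<Rightarrow> 'y::complex_inner" and A :: "'d::finite \<Rightarrow> 'x \<Rightarrow> 'x"
  assumes m0: "m \<noteq> (\<lambda>_. 0)"
  shows "gap C A x m = arv_weight m *
     (\<Sum>i\<in>{i. m i > 0}. (norm (cc C A x m i - scaleR (real (m i) / real (msize m)) (obs_coeff C A x m)))\<^sup>2
        / (real (m i) / real (msize m)))"
proof -
  define I where "I = {i. m i > 0}"
  define p where "p i = real (m i) / real (msize m)" for i
  have ms: "msize m > 0" using m0 msize_zero_iff by auto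
  have w: "arv_weight m > 0" by (rule arv_weight_pos)
  have p0: "p i > 0" if "i \<in> I" for i using that ms by (simp add: p_def I_def)
  have p1: "(\<Sum>i\<in>I. p i) = 1"
  proof -
    have "(\<Sum>i\<in>I. real (m i)) = real (msize m)"
      unfolding msize_def of_nat_sum I_def by (rule sum.mono_neutral_left) auto
    then show ?thesis using ms unfolding p_def by (simp add: sum_divide_distrib[symmetric])
  qed
  have s: "obs_coeff C A x m = (\<Sum>i\<in>I. cc C A x m i)"
    unfolding obs_coeff_def cc_def I_def by (rule sum_words_decomp[OF m0])
  have wi: "arv_weight (msub m i) = arv_weight m / p i" if "i \<in> I" for i
  proof -
    have "arv_weight (msub m i) * real (m i) = arv_weight m * real (msize m)"
      using that by (intro weight_step) (simp add: I_def)
    then show ?thesis using that ms unfolding p_def I_def by (simp add: field_simps)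
  qed
  have "(\<Sum>i\<in>UNIV. Fi C A x i m) = (\<Sum>i\<in>I. arv_weight (msub m i) * (norm (cc C A x m i))\<^sup>2)"
    unfolding Fi_def I_def by (rule sum.mono_neutral_cong_right) auto
  also have "\<dots> = arv_weight m * (\<Sum>i\<in>I. (norm (cc C A x m i))\<^sup>2 / p i)"
    by (simp add: wi sum_distrib_left)
  finally have F: "(\<Sum>i\<in>UNIV. Fi C A x i m) = arv_weight m * (\<Sum>i\<in>I. (norm (cc C A x m i))\<^sup>2 / p i)" .
  have "gap C A x m = arv_weight m * ((\<Sum>i\<in>I. (norm (cc C A x m i))\<^sup>2 / p i) - (norm (\<Sum>i\<in>I. cc C A x m i))\<^sup>2)"
    unfolding gap_def F s using m0 by (simp add: algebra_simps)
  also have "\<dots> = arv_weight m * (\<Sum>i\<in>I. (norm (cc C A x m i - scaleR (p i) (\<Sum>j\<in>I. cc C A x m j)))\<^sup>2 / p i)"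
    by (subst weighted_var[OF _ p0 p1]) (auto simp: I_def)
  finally show ?thesis unfolding s[symmetric] unfolding I_def p_def .
qed

lemma gap_nonneg:
  fixes C :: "'x \<Rightarrow> 'y::complex_inner" and A :: "'d::finite \<Rightarrow> 'x \<Rightarrow> 'x"
  shows "gap C A x m \<ge> 0"
proof (cases "m = (\<lambda>_. 0)")
  case True then show ?thesis by (simp add: gap_at_0)
next
  case False
  have "msize m > 0" using False msize_zero_iff by auto
  then show ?thesis unfolding gap_formula[OF False]
    by (intro mult_nonneg_nonneg sum_nonneg divide_nonneg_pos less_imp_le[OF arv_weight_pos]) auto
qed

lemma gap_zero_iff:
  fixes C :: "'x \<Rightarrow> 'y::complex_inner" and A :: "'d::finite \<Rightarrow> 'x \<Rightarrow> 'x"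
  assumes m0: "m \<noteq> (\<lambda>_. 0)"
  shows "gap C A x m = 0 \<longleftrightarrow>
     (\<forall>i. m i > 0 \<longrightarrow> cc C A x m i = scaleR (real (m i) / real (msize m)) (obs_coeff C A x m))"
proof -
  have ms: "msize m > 0" using m0 msize_zero_iff by auto
  have w: "arv_weight m > 0" by (rule arv_weight_pos)
  let ?t = "\<lambda>i. (norm (cc C A x m i - scaleR (real (m i) / real (msize m)) (obs_coeff C A x m)))\<^sup>2
        / (real (m i) / real (msize m))"
  have t0: "?t i \<ge> 0" if "i \<in> {i. m i > 0}" for i using that ms by (intro divide_nonneg_pos) auto
  have "gap C A x m = 0 \<longleftrightarrow> (\<Sum>i\<in>{i. m i > 0}. ?t i) = 0"
    unfolding gap_formula[OF m0] using w by simp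
  also have "\<dots> \<longleftrightarrow> (\<forall>i\<in>{i. m i > 0}. ?t i = 0)"
    by (rule sum_nonneg_eq_0_iff) (auto intro: t0)
  also have "\<dots> \<longleftrightarrow> (\<forall>i. m i > 0 \<longrightarrow> cc C A x m i = scaleR (real (m i) / real (msize m)) (obs_coeff C A x m))"
    using ms by auto
  finally show ?thesis .
qed


lemma card_W: "real (card (words_of (m :: 'd::finite \<Rightarrow> nat))) = 1 / arv_weight m"
  using card_words_weight[of m] arv_weight_pos[of m] by (simp add: field_simps)

lemma card_W_msub:
  fixes m :: "'d::finite \<Rightarrow> nat"
  assumes mi: "m i > 0"
  shows "real (card (words_of (msub m i))) = real (m i) / (arv_weight m * real (msize m))"
proof -
  have wi: "arv_weight (msub m i) > 0" by (rule arv_weight_pos)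
  have w: "arv_weight m > 0" by (rule arv_weight_pos)
  have ms: "msize m > 0" by (rule msize_pos[of m i, OF mi])
  show ?thesis unfolding card_W using weight_step[of m i, OF mi] wi w ms mi
    by (simp add: field_simps)
qed

lemma abel_length: "abel u = abel v \<Longrightarrow> length u = length (v :: ('d::finite) list)"
  using length_msize[of u] length_msize[of v] by simp

lemma abelian_from_H:
  fixes C :: "'x \<Rightarrow> 'y::complex_inner" and A :: "'d::finite \<Rightarrow> 'x \<Rightarrow> 'x"
  assumes H: "\<And>x m i. m i > 0 \<Longrightarrow> cc C A x m i = scaleR (real (m i) / real (msize m)) (obs_coeff C A x m)"
  shows "C_abelian C A"
proof -
  have main: "\<forall>u v. length u = n \<longrightarrow> abel v = abel u \<longrightarrow> (\<forall>x. C (wordop A v x) = C (wordop A u x))" for n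
  proof (induction n)
    case 0
    show ?case
    proof (intro allI impI)
      fix u v :: "'d list" and x assume l0: "length u = 0" and ab: "abel v = abel u"
      have "length v = length u" using abel_length[OF ab] .
      then have "u = []" "v = []" using l0 by auto
      then show "C (wordop A v x) = C (wordop A u x)" by simp
    qed
  next
    case (Suc n)
    have K: "C (wordop A u x) = scaleR (arv_weight (abel u)) (obs_coeff C A x (abel u))"
      if lu: "length u = Suc n" for u x
    proof -
      obtain u' i where uu: "u = u' @ [i]" using lu by (cases u rule: rev_cases) auto
      define m where "m = abel u"
      have mu: "m = madd (abel u') i" unfolding m_def uu abel_append1 ..
      have mi: "m i > 0" unfolding mu by (rule madd_pos)
      have ms: "msize m > 0" by (rule msize_pos[of m i, OF mi])
      have w: "arv_weight m > 0" by (rule arv_weight_pos)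
      have ms': "msub m i = abel u'" unfolding mu by (rule msub_madd)
      have ln: "length u' = n" using lu uu by simp
      have eqw: "C (wordop A (w @ [i]) x) = C (wordop A u x)" if "w \<in> words_of (msub m i)" for w
      proof -
        have "abel w = abel u'" using that ms' by (simp add: words_of_def)
        then have "C (wordop A w (A i x)) = C (wordop A u' (A i x))" by (rule Suc.IH[rule_format, OF ln])
        then show ?thesis unfolding uu by (simp add: wordop_append)
      qed
      have "cc C A x m i = (\<Sum>w\<in>words_of (msub m i). C (wordop A u x))"
        unfolding cc_def by (rule sum.cong) (auto simp: eqw)
      also have "\<dots> = scaleR (real (m i) / (arv_weight m * real (msize m))) (C (wordop A u x))"
        by (simp add: sum_constant_scaleR card_W_msub[of m i, OF mi])
      finally have eq: "scaleR (real (m i) / (arv_weight m * real (msize m))) (C (wordop A u x))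
          = scaleR (real (m i) / real (msize m)) (obs_coeff C A x m)" using H[of m i x, OF mi] by simp
      define a where "a = real (m i) / (arv_weight m * real (msize m))"
      define b where "b = real (m i) / real (msize m)"
      have a0: "a \<noteq> 0" unfolding a_def using mi ms w by simp
      have ab: "(1 / a) * b = arv_weight m" unfolding a_def b_def using mi ms w by (simp add: field_simps)
      have "C (wordop A u x) = scaleR (1 / a) (scaleR a (C (wordop A u x)))" using a0 by simp
      also have "\<dots> = scaleR (1 / a) (scaleR b (obs_coeff C A x m))" by (simp only: eq[folded a_def b_def])
      also have "\<dots> = scaleR ((1 / a) * b) (obs_coeff C A x m)" by (rule scaleR_scaleR)
      also have "\<dots> = scaleR (arv_weight m) (obs_coeff C A x m)" unfolding ab ..
      finally show ?thesis unfolding m_def .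
    qed
    show ?case
    proof (intro allI impI)
      fix u v :: "'d list" and x assume lu: "length u = Suc n" and ab: "abel v = abel u"
      have lv: "length v = Suc n" using abel_length[OF ab] lu by simp
      have k1: "C (wordop A u x) = scaleR (arv_weight (abel u)) (obs_coeff C A x (abel u))" by (rule K[OF lu])
      have k2: "C (wordop A v x) = scaleR (arv_weight (abel v)) (obs_coeff C A x (abel v))" by (rule K[OF lv])
      show "C (wordop A v x) = C (wordop A u x)" unfolding k1 k2 ab ..
    qed
  qed
  show ?thesis unfolding C_abelian_def
  proof (intro allI impI)
    fix u v :: "'d list" assume abu: "abel v = abel u"
    have "C (wordop A v x) = C (wordop A u x)" for x
      using main[of "length u", rule_format, OF refl abu] .
    then show "C \<circ> wordop A v = C \<circ> wordop A u" by (simp add: fun_eq_iff)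
  qed
qed

lemma H_from_abelian:
  fixes C :: "'x \<Rightarrow> 'y::complex_inner" and A :: "'d::finite \<Rightarrow> 'x \<Rightarrow> 'x"
  assumes ab: "C_abelian C A" and mi: "m i > 0"
  shows "cc C A x m i = scaleR (real (m i) / real (msize m)) (obs_coeff C A x m)"
proof -
  have w: "arv_weight m > 0" by (rule arv_weight_pos)
  have ms: "msize m > 0" by (rule msize_pos[of m i, OF mi])
  have "card (words_of m) \<noteq> 0"
  proof
    assume "card (words_of m) = 0"
    then show False using card_words_weight[of m] by simp
  qed
  then have "words_of m \<noteq> {}" by auto
  then obtain v0 where v0: "v0 \<in> words_of m" by blast
  define z where "z = C (wordop A v0 x)"
  have eqz: "C (wordop A v x) = z" if "v \<in> words_of m" for v
  proof -
    have "abel v = abel v0" using that v0 by (simp add: words_of_def)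
    then have "C \<circ> wordop A v = C \<circ> wordop A v0" using ab unfolding C_abelian_def by blast
    from fun_cong[OF this, of x] show ?thesis unfolding z_def by simp
  qed
  have s: "obs_coeff C A x m = scaleR (1 / arv_weight m) z"
  proof -
    have "obs_coeff C A x m = (\<Sum>v\<in>words_of m. z)" unfolding obs_coeff_def by (rule sum.cong) (auto simp: eqz)
    then show ?thesis by (simp add: sum_constant_scaleR card_W)
  qed
  have "cc C A x m i = (\<Sum>u\<in>words_of (msub m i). z)"
    unfolding cc_def
  proof (rule sum.cong[OF refl])
    fix u assume "u \<in> words_of (msub m i)"
    then have "u @ [i] \<in> words_of m" by (simp add: words_of_def abel_append1 madd_msub[of m i, OF mi])
    then show "C (wordop A (u @ [i]) x) = z" by (rule eqz)
  qed
  also have "\<dots> = scaleR (real (m i) / (arv_weight m * real (msize m))) z"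
    by (simp add: sum_constant_scaleR card_W_msub[of m i, OF mi])
  also have "\<dots> = scaleR (real (m i) / real (msize m)) (obs_coeff C A x m)"
    unfolding s using w by simp
  finally show ?thesis .
qed


context
  fixes C :: "'x::chilbert_space \<Rightarrow> 'y::chilbert_space" and A :: "'d::finite \<Rightarrow> 'x \<Rightarrow> 'x"
  assumes bcC: "bounded_clinear C" and bcA: "\<And>i. bounded_clinear (A i)" and st: "a_output_stable C A"
begin

lemma gram_add: "gram_a C A (x + y) = gram_a C A x + gram_a C A y"
proof (rule cinner_ext_left)
  fix z
  show "cinner (gram_a C A (x + y)) z = cinner (gram_a C A x + gram_a C A y) z"
    unfolding cinner_add_left gram_prop[OF bcC bcA st] obs_add[OF bcC bcA]
    by (rule arv_inner_add_left) (auto intro: inH_obs[OF st])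
qed

lemma gram_scaleC: "gram_a C A (scaleC c x) = scaleC c (gram_a C A x)"
proof (rule cinner_ext_left)
  fix z
  show "cinner (gram_a C A (scaleC c x)) z = cinner (scaleC c (gram_a C A x)) z"
    unfolding cinner_scaleC_left gram_prop[OF bcC bcA st] obs_scaleC[OF bcC bcA]
    by (rule arv_inner_scaleC_left)
qed

lemma gram_self: "cinner (gram_a C A x) x = complex_of_real (arv_norm2 (obs_coeff C A x))"
  unfolding gram_prop[OF bcC bcA st] by (rule arv_inner_self[OF inH_obs[OF st]])

definition EE :: "'x \<Rightarrow> 'x" where
  "EE x = adj C (C x) - (gram_a C A x - (\<Sum>i\<in>UNIV. adj (A i) (gram_a C A (A i x))))"

lemma quad: "cinner (EE x) x = complex_of_real (total C A x)"
proof -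
  have c1: "cinner (adj C (C x)) x = complex_of_real ((norm (C x))\<^sup>2)"
    unfolding adj_prop2[OF bcC] by (rule cinner_self_real)
  have c2: "cinner (adj (A i) (gram_a C A (A i x))) x = complex_of_real (arv_norm2 (obs_coeff C A (A i x)))" for i
    unfolding adj_prop2[OF bcA] by (rule gram_self)
  show ?thesis
    unfolding EE_def total_def cinner_diff_left cinner_sum_left c1 c2 gram_self
    by simp
qed

lemma total_nonneg: "total C A x \<ge> 0"
  using hs_gap[OF st] gap_nonneg by (rule has_sum_nonneg)

lemma EE_add: "EE (x + y) = EE x + EE y"
  unfolding EE_def
  by (simp add: bclin_add[OF bcC] bclin_add[OF bcA] adj_add[OF bcC] adj_add[OF bcA] gram_add sum.distrib algebra_simps)

lemma EE_scaleC: "EE (scaleC c x) = scaleC c (EE x)"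
  unfolding EE_def
  by (simp add: bclin_scaleC[OF bcC] bclin_scaleC[OF bcA] adj_scaleC[OF bcC] adj_scaleC[OF bcA] gram_scaleC
      scaleC_diff_right scaleC_sum_right)

lemma part1: "op_le (\<lambda>x. gram_a C A x - (\<Sum>i\<in>UNIV. adj (A i) (gram_a C A (A i x)))) (\<lambda>x. adj C (C x))"
  unfolding op_le_def
proof
  fix x
  have "cinner (EE x) x = complex_of_real (total C A x)" by (rule quad)
  then show "0 \<le> cinner (adj C (C x) - (gram_a C A x - (\<Sum>i\<in>UNIV. adj (A i) (gram_a C A (A i x))))) x"
    unfolding EE_def using total_nonneg[of x] by (simp add: less_eq_complex_def)
qed

lemma gaps_zero_imp_H:
  assumes "\<And>x m. gap C A x m = 0"
  shows "m i > 0 \<Longrightarrow> cc C A x m i = scaleR (real (m i) / real (msize m)) (obs_coeff C A x m)"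
proof -
  assume mi: "m i > 0"
  then have m0: "m \<noteq> (\<lambda>_. 0)" by auto
  show ?thesis using gap_zero_iff[OF m0, of C A x] assms mi by blast
qed

lemma H_imp_gaps_zero:
  assumes H: "\<And>x m i. m i > 0 \<Longrightarrow> cc C A x m i = scaleR (real (m i) / real (msize m)) (obs_coeff C A x m)"
  shows "gap C A x m = 0"
proof (cases "m = (\<lambda>_. 0)")
  case True then show ?thesis by (simp add: gap_at_0)
next
  case False then show ?thesis using gap_zero_iff[OF False, of C A x] H by blast
qed

lemma part2: "((\<lambda>x. gram_a C A x - (\<Sum>i\<in>UNIV. adj (A i) (gram_a C A (A i x)))) = (\<lambda>x. adj C (C x)))
   \<longleftrightarrow> C_abelian C A"
proof
  assume eq: "(\<lambda>x. gram_a C A x - (\<Sum>i\<in>UNIV. adj (A i) (gram_a C A (A i x)))) = (\<lambda>x. adj C (C x))"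
  have E0: "EE x = 0" for x unfolding EE_def using fun_cong[OF eq, of x] by simp
  have t0: "total C A x = 0" for x using quad[of x] E0[of x] by simp
  have g0: "gap C A x m = 0" for x m
    using nonneg_has_sum_le_0D[OF hs_gap[OF st] _ gap_nonneg] t0[of x] by simp
  show "C_abelian C A"
    by (rule abelian_from_H) (rule gaps_zero_imp_H[OF g0])
next
  assume ab: "C_abelian C A"
  have g0: "gap C A x m = 0" for x m
    by (rule H_imp_gaps_zero) (rule H_from_abelian[OF ab])
  have t0: "total C A x = 0" for x
  proof -
    have gz: "gap C A x = (\<lambda>_. 0)" using g0 by auto
    have "(gap C A x has_sum 0) UNIV" unfolding gz by simp
    then show ?thesis using hs_gap[OF st, of x] has_sum_unique by blast
  qed
  have E0: "EE x = 0" for x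
    by (rule polarization[OF EE_add EE_scaleC]) (simp add: quad t0)
  show "(\<lambda>x. gram_a C A x - (\<Sum>i\<in>UNIV. adj (A i) (gram_a C A (A i x)))) = (\<lambda>x. adj C (C x))"
    using E0 unfolding EE_def by (simp add: fun_eq_iff)
qed

end


lemma group_words:
  fixes f :: "('d::finite) list \<Rightarrow> real"
  assumes nonneg: "\<And>v. f v \<ge> 0"
  shows "(f has_sum S) UNIV \<longleftrightarrow> ((\<lambda>m. \<Sum>v\<in>words_of m. f v) has_sum S) UNIV"
proof -
  define g where "g = (\<lambda>(m :: 'd \<Rightarrow> nat, v :: 'd list). f v)"
  define h where "h = (\<lambda>v :: 'd list. (abel v, v))"
  have inj: "inj h" unfolding h_def by (auto simp: inj_on_def)
  have img: "range h = Sigma UNIV words_of" unfolding h_def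
    by (auto simp: words_of_def image_iff)
  have gh: "g \<circ> h = f" unfolding g_def h_def by (auto simp: fun_eq_iff)
  have e1: "(f has_sum S) UNIV \<longleftrightarrow> (g has_sum S) (Sigma UNIV words_of)"
    using has_sum_reindex[OF inj, of g S] unfolding img gh by simp
  have inner: "((\<lambda>v. g (m, v)) has_sum (\<Sum>v\<in>words_of m. f v)) (words_of m)" for m
    unfolding g_def by (simp add: words_of_finite)
  show ?thesis
  proof
    assume "(f has_sum S) UNIV"
    then have "(g has_sum S) (Sigma UNIV words_of)" using e1 by simp
    then show "((\<lambda>m. \<Sum>v\<in>words_of m. f v) has_sum S) UNIV"
      by (rule has_sum_SigmaD) (rule inner)
  next
    assume H: "((\<lambda>m. \<Sum>v\<in>words_of m. f v) has_sum S) UNIV"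
    have gnn: "g p \<ge> 0" for p unfolding g_def using nonneg by (auto split: prod.splits)
    have "g summable_on (Sigma UNIV words_of)"
    proof (rule nonneg_bdd_above_summable_on)
      show "0 \<le> g p" if "p \<in> Sigma UNIV words_of" for p by (rule gnn)
      show "bdd_above (sum g ` {F. F \<subseteq> Sigma UNIV words_of \<and> finite F})"
      proof (rule bdd_aboveI2)
        fix F :: "(('d \<Rightarrow> nat) \<times> 'd list) set" assume F: "F \<in> {F. F \<subseteq> Sigma UNIV words_of \<and> finite F}"
        then have fF: "finite F" and sF: "F \<subseteq> Sigma UNIV words_of" by auto
        have sub: "F \<subseteq> Sigma (fst ` F) words_of" using sF by force
        have "sum g F \<le> sum g (Sigma (fst ` F) words_of)"
          by (rule sum_mono2) (auto simp: fF words_of_finite sub gnn)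
        also have "\<dots> = (\<Sum>m\<in>fst ` F. \<Sum>v\<in>words_of m. g (m, v))"
          using sum.Sigma[of "fst ` F" words_of "\<lambda>m v. g (m, v)"] by (simp add: fF words_of_finite)
        also have "\<dots> = (\<Sum>m\<in>fst ` F. \<Sum>v\<in>words_of m. f v)" unfolding g_def by simp
        also have "\<dots> \<le> S"
          by (rule finite_sum_le_has_sum[OF H]) (auto simp: fF intro: sum_nonneg nonneg)
        finally show "sum g F \<le> S" .
      qed
    qed
    then have "(g has_sum S) (Sigma UNIV words_of)"
      by (rule has_sum_SigmaI[OF inner H, rotated])
    then show "(f has_sum S) UNIV" using e1 by simp
  qed
qed

lemma grp_identity:
  fixes a :: "'d::finite list \<Rightarrow> 'y::complex_inner" and m :: "'d \<Rightarrow> nat"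
  shows "(\<Sum>v\<in>words_of m. (norm (a v))\<^sup>2) - arv_weight m * (norm (\<Sum>v\<in>words_of m. a v))\<^sup>2
       = (\<Sum>v\<in>words_of m. (norm (a v - scaleR (arv_weight m) (\<Sum>u\<in>words_of m. a u)))\<^sup>2)"
proof -
  have w: "arv_weight m > 0" by (rule arv_weight_pos)
  have p1: "(\<Sum>v\<in>words_of m. arv_weight m) = 1" using card_words_weight[of m] by simp
  have "(\<Sum>v\<in>words_of m. (norm (a v))\<^sup>2 / arv_weight m) - (norm (\<Sum>v\<in>words_of m. a v))\<^sup>2
      = (\<Sum>v\<in>words_of m. (norm (a v - scaleR (arv_weight m) (\<Sum>u\<in>words_of m. a u)))\<^sup>2 / arv_weight m)"
    by (rule weighted_var[OF words_of_finite w p1])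
  then have "arv_weight m * ((\<Sum>v\<in>words_of m. (norm (a v))\<^sup>2 / arv_weight m) - (norm (\<Sum>v\<in>words_of m. a v))\<^sup>2)
      = arv_weight m * (\<Sum>v\<in>words_of m. (norm (a v - scaleR (arv_weight m) (\<Sum>u\<in>words_of m. a u)))\<^sup>2 / arv_weight m)"
    by simp
  moreover have "arv_weight m * (\<Sum>v\<in>words_of m. (norm (a v))\<^sup>2 / arv_weight m) = (\<Sum>v\<in>words_of m. (norm (a v))\<^sup>2)"
    using w by (simp add: sum_distrib_left)
  moreover have "arv_weight m * (\<Sum>v\<in>words_of m. (norm (a v - scaleR (arv_weight m) (\<Sum>u\<in>words_of m. a u)))\<^sup>2 / arv_weight m)
     = (\<Sum>v\<in>words_of m. (norm (a v - scaleR (arv_weight m) (\<Sum>u\<in>words_of m. a u)))\<^sup>2)"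
    using w by (simp add: sum_distrib_left)
  ultimately show ?thesis by (simp add: right_diff_distrib)
qed

context
  fixes C :: "'x::chilbert_space \<Rightarrow> 'y::chilbert_space" and A :: "'d::finite \<Rightarrow> 'x \<Rightarrow> 'x"
  assumes bcC: "bounded_clinear C" and bcA: "\<And>i. bounded_clinear (A i)" and st: "a_output_stable C A"
begin

definition PP :: "'d list \<Rightarrow> 'x \<Rightarrow> 'x" where
  "PP v x = adj (wordop A v) (adj C (C (wordop A v x)))"

lemma PP_inner: "cinner (PP v x) y = cinner (C (wordop A v x)) (C (wordop A v y))"
  unfolding PP_def adj_prop2[OF bclin_wordop[OF bcA]] adj_prop2[OF bcC] ..

lemma PP_self: "cinner (PP v x) x = complex_of_real ((norm (C (wordop A v x)))\<^sup>2)"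
  unfolding PP_inner by (rule cinner_self_real)

lemma obs_norm_groups:
  "((\<lambda>m. arv_weight m * (norm (obs_coeff C A x m))\<^sup>2) has_sum arv_norm2 (obs_coeff C A x)) UNIV"
  using inH_obs[OF st] unfolding inH_def arv_norm2_def by simp

lemma part3a:
  assumes nc: "is_nc_gram C A (gram_a C A)"
  shows "C_abelian C A"
proof -
  have key: "C (wordop A v x) = scaleR (arv_weight (abel v)) (obs_coeff C A x (abel v))" for v x
  proof -
    have hs: "((\<lambda>v. PP v x) has_sum gram_a C A x) UNIV"
      using nc unfolding is_nc_gram_def PP_def by blast
    have "((\<lambda>v. cinner (PP v x) x) has_sum cinner (gram_a C A x) x) UNIV"
      by (rule has_sum_bounded_linear[OF bounded_linear_cinner_left hs])
    then have "((\<lambda>v. complex_of_real ((norm (C (wordop A v x)))\<^sup>2)) has_sum complex_of_real (arv_norm2 (obs_coeff C A x))) UNIV"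
      unfolding PP_self gram_self[OF bcC bcA st] .
    then have h1: "((\<lambda>v. (norm (C (wordop A v x)))\<^sup>2) has_sum arv_norm2 (obs_coeff C A x)) UNIV"
      by (simp only: has_sum_of_real_iff)
    then have h2: "((\<lambda>m. \<Sum>v\<in>words_of m. (norm (C (wordop A v x)))\<^sup>2) has_sum arv_norm2 (obs_coeff C A x)) UNIV"
      by (subst group_words[symmetric]) auto
    have h3: "((\<lambda>m. (\<Sum>v\<in>words_of m. (norm (C (wordop A v x)))\<^sup>2) + - (arv_weight m * (norm (obs_coeff C A x m))\<^sup>2))
        has_sum (arv_norm2 (obs_coeff C A x) + - arv_norm2 (obs_coeff C A x))) UNIV"
      by (intro has_sum_add h2 has_sum_uminusI obs_norm_groups)
    define D where "D m = (\<Sum>u\<in>words_of m. (norm (C (wordop A u x) - scaleR (arv_weight m) (obs_coeff C A x m)))\<^sup>2)" for m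
    have Deq: "(\<Sum>v\<in>words_of m. (norm (C (wordop A v x)))\<^sup>2) + - (arv_weight m * (norm (obs_coeff C A x m))\<^sup>2) = D m" for m
      using grp_identity[of "\<lambda>v. C (wordop A v x)" m] unfolding D_def obs_coeff_def by simp
    have hD: "(D has_sum 0) UNIV" using h3 unfolding Deq by simp
    have D0: "D m = 0" for m
      by (rule nonneg_has_sum_le_0D[OF hD]) (auto simp: D_def intro: sum_nonneg)
    have "v \<in> words_of (abel v)" by (simp add: words_of_def)
    then have "(norm (C (wordop A v x) - scaleR (arv_weight (abel v)) (obs_coeff C A x (abel v))))\<^sup>2 = 0"
      using D0[of "abel v"] unfolding D_def by (subst (asm) sum_nonneg_eq_0_iff) (auto simp: words_of_finite)
    then show ?thesis by simp
  qed
  show ?thesis unfolding C_abelian_def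
  proof (intro allI impI)
    fix u v :: "'d list" assume abu: "abel v = abel u"
    have "C (wordop A v x) = C (wordop A u x)" for x using key[of v x] key[of u x] abu by simp
    then show "C \<circ> wordop A v = C \<circ> wordop A u" by (simp add: fun_eq_iff)
  qed
qed

end


context
  fixes C :: "'x::chilbert_space \<Rightarrow> 'y::chilbert_space" and A :: "'d::finite \<Rightarrow> 'x \<Rightarrow> 'x"
  assumes bcC: "bounded_clinear C" and bcA: "\<And>i. bounded_clinear (A i)" and st: "a_output_stable C A"
begin

lemma PP_add: "PP C A v (x + y) = PP C A v x + PP C A v y"
  unfolding PP_def[OF bcC bcA st]
  by (simp add: bclin_add[OF bclin_wordop[OF bcA]] bclin_add[OF bcC] adj_add[OF bcC] adj_add[OF bclin_wordop[OF bcA]])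

lemma PP_scaleC: "PP C A v (scaleC c x) = scaleC c (PP C A v x)"
  unfolding PP_def[OF bcC bcA st]
  by (simp add: bclin_scaleC[OF bclin_wordop[OF bcA]] bclin_scaleC[OF bcC] adj_scaleC[OF bcC] adj_scaleC[OF bclin_wordop[OF bcA]])

lemma abel_const:
  assumes ab: "C_abelian C A" and v: "v \<in> words_of m"
  shows "C (wordop A v z) = scaleR (arv_weight m) (obs_coeff C A z m)"
proof -
  have "obs_coeff C A z m = (\<Sum>u\<in>words_of m. C (wordop A v z))"
    unfolding obs_coeff_def
  proof (rule sum.cong[OF refl])
    fix u assume "u \<in> words_of m"
    then have "abel v = abel u" using v by (simp add: words_of_def)
    then have "C \<circ> wordop A v = C \<circ> wordop A u" using ab unfolding C_abelian_def by blast
    from fun_cong[OF this, of z] show "C (wordop A u z) = C (wordop A v z)" by simp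
  qed
  also have "\<dots> = scaleR (real (card (words_of m))) (C (wordop A v z))" by (simp add: sum_constant_scaleR)
  finally have "scaleR (arv_weight m) (obs_coeff C A z m) = scaleR (arv_weight m * real (card (words_of m))) (C (wordop A v z))"
    by simp
  also have "arv_weight m * real (card (words_of m)) = 1" using card_words_weight[of m] by (simp add: mult.commute)
  finally show ?thesis by simp
qed

lemma abel_sq_sum:
  assumes ab: "C_abelian C A"
  shows "((\<lambda>v. (norm (C (wordop A v z)))\<^sup>2) has_sum arv_norm2 (obs_coeff C A z)) UNIV"
proof -
  have eq: "(\<Sum>v\<in>words_of m. (norm (C (wordop A v z)))\<^sup>2) = arv_weight m * (norm (obs_coeff C A z m))\<^sup>2" for m
  proof -
    have "(\<Sum>v\<in>words_of m. (norm (C (wordop A v z)))\<^sup>2) - arv_weight m * (norm (\<Sum>v\<in>words_of m. C (wordop A v z)))\<^sup>2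
       = (\<Sum>v\<in>words_of m. (norm (C (wordop A v z) - scaleR (arv_weight m) (\<Sum>u\<in>words_of m. C (wordop A u z))))\<^sup>2)"
      by (rule grp_identity)
    also have "\<dots> = 0"
      unfolding obs_coeff_def[symmetric] using abel_const[OF ab] by simp
    finally show ?thesis unfolding obs_coeff_def by simp
  qed
  have "((\<lambda>m. \<Sum>v\<in>words_of m. (norm (C (wordop A v z)))\<^sup>2) has_sum arv_norm2 (obs_coeff C A z)) UNIV"
    unfolding eq by (rule obs_norm_groups[OF bcC bcA st])
  then show ?thesis by (subst group_words) auto
qed

lemma part3b:
  assumes ab: "C_abelian C A"
  shows "is_nc_gram C A (gram_a C A)"
  unfolding is_nc_gram_def
proof
  fix x
  obtain M where M0: "M > 0" and M: "\<And>z. arv_norm2 (obs_coeff C A z) \<le> M * (norm z)\<^sup>2"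
    using stab_bound[OF st] by blast
  define G where "G = gram_a C A"
  define R where "R F z = G z - (\<Sum>v\<in>F. PP C A v z)" for F z
  define T where "T F z = arv_norm2 (obs_coeff C A z) - (\<Sum>v\<in>F. (norm (C (wordop A v z)))\<^sup>2)" for F z
  have hsq: "((\<lambda>v. (norm (C (wordop A v z)))\<^sup>2) has_sum arv_norm2 (obs_coeff C A z)) UNIV" for z
    by (rule abel_sq_sum[OF ab])
  have Rq: "cinner (R F z) z = complex_of_real (T F z)" for F z
    unfolding R_def T_def G_def cinner_diff_left cinner_sum_left gram_self[OF bcC bcA st] PP_self[OF bcC bcA st]
    by simp
  have Tnn: "T F z \<ge> 0" if "finite F" for F z
    unfolding T_def using finite_sum_le_has_sum[OF hsq[of z] that] by simp
  have Tle: "T F z \<le> M * (norm z)\<^sup>2" for F z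
  proof -
    have "(\<Sum>v\<in>F. (norm (C (wordop A v z)))\<^sup>2) \<ge> 0" by (rule sum_nonneg) simp
    then show ?thesis unfolding T_def using M[of z] by linarith
  qed
  have Gh: "cinner (G y) z = cnj (cinner (G z) y)" for y z
    unfolding G_def gram_prop[OF bcC bcA st] by (rule arv_inner_commute)
  have Ph: "cinner (PP C A v y) z = cnj (cinner (PP C A v z) y)" for v y z
    unfolding PP_inner[OF bcC bcA st] by (rule cinner_commute)
  have Rh: "cinner (R F y) z = cnj (cinner (R F z) y)" for F y z
  proof -
    have "cinner (R F y) z = cinner (G y) z - (\<Sum>v\<in>F. cinner (PP C A v y) z)"
      unfolding R_def cinner_diff_left cinner_sum_left ..
    also have "\<dots> = cnj (cinner (G z) y) - (\<Sum>v\<in>F. cnj (cinner (PP C A v z) y))"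
      unfolding Gh[of y z] Ph[of _ y z] ..
    also have "\<dots> = cnj (cinner (R F z) y)"
      unfolding R_def cinner_diff_left cinner_sum_left by simp
    finally show ?thesis .
  qed
  have Rlin: "R F (z + scaleC c y) = R F z + scaleC c (R F y)" for F z c y
    unfolding R_def G_def
    by (simp add: gram_add[OF bcC bcA st] gram_scaleC[OF bcC bcA st] PP_add PP_scaleC sum.distrib
        scaleC_sum_right scaleC_diff_right algebra_simps)
  have key: "(norm (R F x))\<^sup>2 \<le> M * T F x" if fF: "finite F" for F
  proof -
    define y where "y = R F x"
    define t where "t = 1 / M"
    define c where "c = complex_of_real (- t)"
    have t0: "t > 0" unfolding t_def using M0 by simp
    have cc: "cnj c = c" unfolding c_def by simp
    have ry: "cinner (R F x) y = complex_of_real ((norm y)\<^sup>2)" unfolding y_def by (rule cinner_self_real)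
    have ry2: "cinner (R F y) x = complex_of_real ((norm y)\<^sup>2)" unfolding Rh[of F y x] ry by simp
    have "complex_of_real (T F (x + scaleC c y)) = cinner (R F (x + scaleC c y)) (x + scaleC c y)"
      by (rule Rq[symmetric])
    also have "\<dots> = cinner (R F x) x + cnj c * cinner (R F x) y + c * cinner (R F y) x + c * cnj c * cinner (R F y) y"
      unfolding Rlin by (simp add: cinner_add_left cinner_add_right cinner_scaleC_left cinner_scaleC_right algebra_simps)
    also have "\<dots> = complex_of_real (T F x - 2 * t * (norm y)\<^sup>2 + t\<^sup>2 * T F y)"
      unfolding cc ry ry2 Rq c_def by (simp add: algebra_simps power2_eq_square)
    finally have "T F (x + scaleC c y) = T F x - 2 * t * (norm y)\<^sup>2 + t\<^sup>2 * T F y"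
      using of_real_eq_iff by blast
    moreover have "T F (x + scaleC c y) \<ge> 0" by (rule Tnn[OF fF])
    moreover have "t\<^sup>2 * T F y \<le> t\<^sup>2 * (M * (norm y)\<^sup>2)" by (rule mult_left_mono[OF Tle]) simp
    moreover have "t\<^sup>2 * (M * (norm y)\<^sup>2) = t * (norm y)\<^sup>2" unfolding t_def using M0 by (simp add: power2_eq_square)
    ultimately have "t * (norm y)\<^sup>2 \<le> T F x" by linarith
    then have "(1 / M) * (norm y)\<^sup>2 \<le> T F x" unfolding t_def .
    then show ?thesis unfolding y_def using M0 by (simp add: field_simps)
  qed
  have lim_sq: "(sum (\<lambda>v. (norm (C (wordop A v x)))\<^sup>2) \<longlongrightarrow> arv_norm2 (obs_coeff C A x)) (finite_subsets_at_top UNIV)"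
    using hsq[of x] unfolding has_sum_def .
  have "((\<lambda>F. sqrt (M * T F x)) \<longlongrightarrow> sqrt (M * (arv_norm2 (obs_coeff C A x) - arv_norm2 (obs_coeff C A x)))) (finite_subsets_at_top UNIV)"
    unfolding T_def by (intro tendsto_intros lim_sq)
  then have lim0: "((\<lambda>F. sqrt (M * T F x)) \<longlongrightarrow> 0) (finite_subsets_at_top UNIV)" by simp
  have ev: "eventually (\<lambda>F. norm ((\<Sum>v\<in>F. PP C A v x) - G x) \<le> sqrt (M * T F x)) (finite_subsets_at_top UNIV)"
  proof (rule eventually_finite_subsets_at_top_weakI)
    fix F :: "'d list set" assume fF: "finite F"
    have "norm ((\<Sum>v\<in>F. PP C A v x) - G x) = norm (R F x)" unfolding R_def by (rule norm_minus_commute)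
    also have "\<dots> \<le> sqrt (M * T F x)" by (rule real_le_rsqrt[OF key[OF fF]])
    finally show "norm ((\<Sum>v\<in>F. PP C A v x) - G x) \<le> sqrt (M * T F x)" .
  qed
  have "((\<lambda>F. (\<Sum>v\<in>F. PP C A v x) - G x) \<longlongrightarrow> 0) (finite_subsets_at_top UNIV)"
    by (rule Lim_null_comparison[OF ev lim0])
  then have "(sum (\<lambda>v. PP C A v x) \<longlongrightarrow> G x) (finite_subsets_at_top UNIV)"
    unfolding LIM_zero_iff .
  then show "((\<lambda>v. adj (wordop A v) (adj C (C (wordop A v x)))) has_sum gram_a C A x) UNIV"
    unfolding has_sum_def PP_def[OF bcC bcA st] G_def .
qed

end

theorem proposition3p3:
  fixes C :: "'x::chilbert_space \<Rightarrow> 'y::chilbert_space"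
    and A :: "'d::finite \<Rightarrow> 'x \<Rightarrow> 'x"
  assumes "bounded_clinear C"
    and "\<And>i. bounded_clinear (A i)"
    and "a_output_stable C A"
  shows "op_le (\<lambda>x. gram_a C A x - (\<Sum>i\<in>UNIV. adj (A i) (gram_a C A (A i x))))
                (\<lambda>x. adj C (C x))
         \<and> ((\<lambda>x. gram_a C A x - (\<Sum>i\<in>UNIV. adj (A i) (gram_a C A (A i x)))) = (\<lambda>x. adj C (C x))
              \<longleftrightarrow> C_abelian C A)
         \<and> (C_abelian C A \<longleftrightarrow> is_nc_gram C A (gram_a C A))"
  using part1[OF assms] part2[OF assms] part3a[OF assms] part3b[OF assms] by blast

end
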